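(* The Ewens distribution $p^\star$, $p^\star_N(\pi)=\frac{\prod_{B\in\pi}(b-1)!}{n!}$, is the unique random partition $p$ with the following properties: (i) $p$ generates the potential for TU games, i.e., $\mathrm{E}_p(v)=\mathrm{Pot}(v)$ for all $N\subseteq\mathbf{U}$ and all TU games $v$ on $N$; (ii) there exists a path independent restriction operator $r$ that preserves null games, satisfies $\mathrm{Pot}^r=\mathrm{E}_p$, and whose $r$-Shapley value $\mathrm{Sh}^r$ satisfies the null player property or monotonicity. Moreover, the restriction operator $r^\star$ given by $$w^{r^\star}_{-i}(S,\pi)=\frac{1}{n-s}w(S,\pi_{+i\leadsto\emptyset})+\sum_{B\in\pi}\frac{b}{n-s}w(S,\pi_{+i\leadsto B})$$ (for all $N\subseteq\mathbf{U}$, $w\in\mathbb{W}(N)$, $i\in N$, $(S,\pi)\in\mathcal{E}(N\setminus\{i\})$) is the unique such restriction operator, and it induces the MPW solution: $\mathrm{Sh}^{r^\star}=\mathrm{MPW}$.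
   Context: $\mathbf{U}$ is a finite set of players; cardinalities of sets $N,S,T,B$ are $n,s,t,b$. $\Pi(N)$ is the set of partitions of $N$ (with $\Pi(\emptyset)=\{\emptyset\}$). A random partition is a family $p=(p_N)_{N\subseteq\mathbf{U}}$ with $p_N$ a probability distribution on $\Pi(N)$. For $\pi\in\Pi(N\setminus\{i\})$ and $B\in\pi$, $\pi_{+i\leadsto B}=(\pi\setminus\{B\})\cup\{B\cup\{i\}\}$ and $\pi_{+i\leadsto\emptyset}=\pi\cup\{\{i\}\}$. A TU game on $N$ is $v:2^N\to\mathbb{R}$, $v(\emptyset)=0$; $v_{-i}$ is its restriction to $2^{N\setminus\{i\}}$. The Shapley value is $\mathrm{Sh}_i(v)=\sum_{S\subseteq N\setminus\{i\}}\frac{s!(n-s-1)!}{n!}(v(S\cup\{i\})-v(S))$. The potential for TU games is $\mathrm{Pot}(v)=\sum_{\emptyset\neq S\subseteq N}\frac{(s-1)!(n-s)!}{n!}v(S)$ (the unique map with $\mathrm{Pot}=0$ on the empty player set and $\sum_{i\in N}[\mathrm{Pot}(v)-\mathrm{Pot}(v_{-i})]=v(N)$). Embedded coalitions: $\mathcal{E}(N)=\{(S,\pi):S\subseteq N,\pi\in\Pi(N\setminus S)\}$. A TUX game on $N$ is $w:\mathcal{E}(N)\to\mathbb{R}$ with $w(\emptyset,\pi)=0$; $\mathbb{W}(N)$ is their set; a TU game $v$ is identified with the TUX game $w(S,\pi)=v(S)$; $\mathbf{0}^N$ is the null game. $\mathrm{E}_p(w)=\sum_{\pi\in\Pi(N)}p_N(\pi)\sum_{S\in\pi}w(S,\pi\setminus\{S\})$.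 A restriction operator $r$ assigns to each $N$, $w\in\mathbb{W}(N)$, $i\in N$ a game $w^r_{-i}\in\mathbb{W}(N\setminus\{i\})$ such that $w^r_{-i}(S,\pi)$ depends only on the values $w(S,\pi_{+i\leadsto B})$, $B\in\pi\cup\{\emptyset\}$. Path independent: $(w^r_{-i})^r_{-j}=(w^r_{-j})^r_{-i}$ for distinct $i,j$ (so $w^r_{-T}$ is well defined). Preserves null games: $(\mathbf{0}^N)^r_{-i}=\mathbf{0}^{N\setminus\{i\}}$. For path independent $r$: the auxiliary TU game is $v^r_w(S)=w^r_{-(N\setminus S)}(S,\emptyset)$, the $r$-potential is $\mathrm{Pot}^r(w)=\mathrm{Pot}(v^r_w)$ (the unique map with $\mathrm{Pot}^r(\mathbf{0}^\emptyset)=0$ and $\sum_{i\in N}[\mathrm{Pot}^r(w)-\mathrm{Pot}^r(w^r_{-i})]=w(N,\emptyset)$), and the $r$-Shapley value is $\mathrm{Sh}^r(w)=\mathrm{Sh}(v^r_w)$. The MPW solution is $\mathrm{MPW}(w)=\mathrm{Sh}(\bar v^\star_w)$ where $\bar v^\star_w(S)=\sum_{\pi\in\Pi(N\setminus S)}p^\star_{N\setminus S}(\pi)w(S,\pi)$. Player $i$ is a null player in $w\in\mathbb{W}(N)$ if $w(S\cup\{i\},\pi)=w(S,\pi_{+i\leadsto B})$ for all $(S,\pi)\in\mathcal{E}(N\setminus\{i\})$, $B\in\pi\cup\{\emptyset\}$. A solution $\varphi$ (assigning $\varphi(w)\in\mathbb{R}^N$ to each $w\in\mathbb{W}(N)$)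 satisfies the null player property if $\varphi_i(w)=0$ whenever $i$ is a null player in $w$; it satisfies monotonicity if, for $w,z\in\mathbb{W}(N)$ and $i\in N$ with $w(S\cup\{i\},\pi)-w(S,\pi_{+i\leadsto B})\ge z(S\cup\{i\},\pi)-z(S,\pi_{+i\leadsto B})$ for all $(S,\pi)\in\mathcal{E}(N\setminus\{i\})$, $B\in\pi\cup\{\emptyset\}$, one has $\varphi_i(w)\ge\varphi_i(z)$. *)

theory Defs
  imports Complex_Main "HOL-Library.Disjoint_Sets"
begin

type_synonym 'a tux = "'a set \<Rightarrow> 'a set set \<Rightarrow> real"
type_synonym 'a rpart = "'a set \<Rightarrow> 'a set set \<Rightarrow> real"
type_synonym 'a restr = "'a set \<Rightarrow> 'a tux \<Rightarrow> 'a \<Rightarrow> 'a tux"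
type_synonym 'a solution = "'a set \<Rightarrow> 'a tux \<Rightarrow> 'a \<Rightarrow> real"

definition partitions :: "'a set \<Rightarrow> 'a set set set" where
  "partitions N = {\<pi>. partition_on N \<pi>}"

(* pi_{+i ~> B}; B = {} encodes the empty set option *)
definition add_to :: "'a \<Rightarrow> 'a set set \<Rightarrow> 'a set \<Rightarrow> 'a set set" where
  "add_to i \<pi> B = (if B = {} then insert {i} \<pi> else insert (insert i B) (\<pi> - {B}))"

definition embedded :: "'a set \<Rightarrow> 'a set \<Rightarrow> 'a set set \<Rightarrow> bool" where
  "embedded N S \<pi> \<longleftrightarrow> S \<subseteq> N \<and> partition_on (N - S) \<pi>"

(* w in W(N) (values outside E(N) are irrelevant) *)
definition tux_game :: "'a set \<Rightarrow> 'a tux \<Rightarrow> bool" where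
  "tux_game N w \<longleftrightarrow> (\<forall>\<pi>. partition_on N \<pi> \<longrightarrow> w {} \<pi> = 0)"

definition random_partition :: "'a set \<Rightarrow> 'a rpart \<Rightarrow> bool" where
  "random_partition U p \<longleftrightarrow> (\<forall>N. N \<subseteq> U \<longrightarrow>
     (\<forall>\<pi>\<in>partitions N. p N \<pi> \<ge> 0) \<and> (\<Sum>\<pi>\<in>partitions N. p N \<pi>) = 1)"

definition ewens :: "'a rpart" where
  "ewens N \<pi> = (\<Prod>B\<in>\<pi>. fact (card B - 1)) / fact (card N)"

definition expect :: "'a rpart \<Rightarrow> 'a set \<Rightarrow> 'a tux \<Rightarrow> real" where
  "expect p N w = (\<Sum>\<pi>\<in>partitions N. p N \<pi> * (\<Sum>S\<in>\<pi>. w S (\<pi> - {S})))"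

definition shapley :: "'a set \<Rightarrow> ('a set \<Rightarrow> real) \<Rightarrow> 'a \<Rightarrow> real" where
  "shapley N v i = (\<Sum>S | S \<subseteq> N - {i}.
     fact (card S) * fact (card N - card S - 1) / fact (card N) * (v (insert i S) - v S))"

definition pot :: "'a set \<Rightarrow> ('a set \<Rightarrow> real) \<Rightarrow> real" where
  "pot N v = (\<Sum>S | S \<subseteq> N \<and> S \<noteq> {}.
     fact (card S - 1) * fact (card N - card S) / fact (card N) * v S)"

definition generates_potential :: "'a set \<Rightarrow> 'a rpart \<Rightarrow> bool" where
  "generates_potential U p \<longleftrightarrow> (\<forall>N v. N \<subseteq> U \<longrightarrow> v {} = 0 \<longrightarrow>
      expect p N (\<lambda>S \<pi>. v S) = pot N v)"

definition restriction_operator :: "'a set \<Rightarrow> 'a restr \<Rightarrow> bool" where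
  "restriction_operator U r \<longleftrightarrow> (\<forall>N w i. N \<subseteq> U \<longrightarrow> tux_game N w \<longrightarrow> i \<in> N \<longrightarrow>
      tux_game (N - {i}) (r N w i) \<and>
      (\<forall>w' S \<pi>. tux_game N w' \<longrightarrow> embedded (N - {i}) S \<pi> \<longrightarrow>
          (\<forall>B\<in>insert {} \<pi>. w S (add_to i \<pi> B) = w' S (add_to i \<pi> B)) \<longrightarrow>
          r N w i S \<pi> = r N w' i S \<pi>))"

definition path_independent :: "'a set \<Rightarrow> 'a restr \<Rightarrow> bool" where
  "path_independent U r \<longleftrightarrow> (\<forall>N w i j S \<pi>. N \<subseteq> U \<longrightarrow> tux_game N w \<longrightarrow>
      i \<in> N \<longrightarrow> j \<in> N \<longrightarrow> i \<noteq> j \<longrightarrow> embedded (N - {i, j}) S \<pi> \<longrightarrow>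
      r (N - {i}) (r N w i) j S \<pi> = r (N - {j}) (r N w j) i S \<pi>)"

definition preserves_null :: "'a set \<Rightarrow> 'a restr \<Rightarrow> bool" where
  "preserves_null U r \<longleftrightarrow> (\<forall>N i S \<pi>. N \<subseteq> U \<longrightarrow> i \<in> N \<longrightarrow> embedded (N - {i}) S \<pi> \<longrightarrow>
      r N (\<lambda>S \<pi>. 0) i S \<pi> = 0)"

fun restr_list :: "'a restr \<Rightarrow> 'a set \<Rightarrow> 'a tux \<Rightarrow> 'a list \<Rightarrow> 'a tux" where
  "restr_list r N w [] = w"
| "restr_list r N w (i # is) = restr_list r (N - {i}) (r N w i) is"

(* w^r_{-T}: well defined (order independent) for path independent r *)
definition restr_set :: "'a restr \<Rightarrow> 'a set \<Rightarrow> 'a tux \<Rightarrow> 'a set \<Rightarrow> 'a tux" where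
  "restr_set r N w T = restr_list r N w (SOME xs. distinct xs \<and> set xs = T)"

definition aux_game :: "'a restr \<Rightarrow> 'a set \<Rightarrow> 'a tux \<Rightarrow> 'a set \<Rightarrow> real" where
  "aux_game r N w S = restr_set r N w (N - S) S {}"

definition pot_r :: "'a restr \<Rightarrow> 'a set \<Rightarrow> 'a tux \<Rightarrow> real" where
  "pot_r r N w = pot N (aux_game r N w)"

definition shapley_r :: "'a restr \<Rightarrow> 'a solution" where
  "shapley_r r N w i = shapley N (aux_game r N w) i"

definition mpw :: "'a solution" where
  "mpw N w i = shapley N (\<lambda>S. \<Sum>\<pi>\<in>partitions (N - S). ewens (N - S) \<pi> * w S \<pi>) i"

definition null_player :: "'a set \<Rightarrow> 'a tux \<Rightarrow> 'a \<Rightarrow> bool" where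
  "null_player N w i \<longleftrightarrow> (\<forall>S \<pi>. embedded (N - {i}) S \<pi> \<longrightarrow>
      (\<forall>B\<in>insert {} \<pi>. w (insert i S) \<pi> = w S (add_to i \<pi> B)))"

definition null_player_property :: "'a set \<Rightarrow> 'a solution \<Rightarrow> bool" where
  "null_player_property U \<phi> \<longleftrightarrow> (\<forall>N w i. N \<subseteq> U \<longrightarrow> tux_game N w \<longrightarrow> i \<in> N \<longrightarrow>
      null_player N w i \<longrightarrow> \<phi> N w i = 0)"

definition monotonic :: "'a set \<Rightarrow> 'a solution \<Rightarrow> bool" where
  "monotonic U \<phi> \<longleftrightarrow> (\<forall>N w z i. N \<subseteq> U \<longrightarrow> tux_game N w \<longrightarrow> tux_game N z \<longrightarrow> i \<in> N \<longrightarrow>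
      (\<forall>S \<pi>. embedded (N - {i}) S \<pi> \<longrightarrow> (\<forall>B\<in>insert {} \<pi>.
          w (insert i S) \<pi> - w S (add_to i \<pi> B) \<ge> z (insert i S) \<pi> - z S (add_to i \<pi> B))) \<longrightarrow>
      \<phi> N w i \<ge> \<phi> N z i)"

(* property (ii) for a given random partition p and operator r *)
definition admissible_restriction :: "'a set \<Rightarrow> 'a rpart \<Rightarrow> 'a restr \<Rightarrow> bool" where
  "admissible_restriction U p r \<longleftrightarrow> restriction_operator U r \<and> path_independent U r \<and>
     preserves_null U r \<and>
     (\<forall>N w. N \<subseteq> U \<longrightarrow> tux_game N w \<longrightarrow> pot_r r N w = expect p N w) \<and>
     (null_player_property U (shapley_r r) \<or> monotonic U (shapley_r r))"

definition r_star :: "'a restr" where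
  "r_star N w i S \<pi> = 1 / real (card N - card S) * w S (add_to i \<pi> {})
     + (\<Sum>B\<in>\<pi>. real (card B) / real (card N - card S) * w S (add_to i \<pi> B))"

end

theory Submission
  imports Defs
begin

lemma pon_iff: "partition_on A P \<longleftrightarrow> \<Union>P = A \<and> (\<forall>X\<in>P. \<forall>Y\<in>P. X \<noteq> Y \<longrightarrow> X \<inter> Y = {}) \<and> {} \<notin> P"
  by (auto simp: partition_on_def disjoint_def)

definition rem :: "'a \<Rightarrow> 'a set set \<Rightarrow> 'a set set" where
  "rem x \<rho> = (\<lambda>X. X - {x}) ` \<rho> - {{}}"

lemma add_to_part:
  assumes "partition_on A \<pi>" "x \<notin> A" "B \<in> insert {} \<pi>"
  shows "partition_on (insert x A) (add_to x \<pi> B)"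
proof (cases "B = {}")
  case True
  then show ?thesis using assms unfolding pon_iff add_to_def by auto
next
  case False
  then have B: "B \<in> \<pi>" using assms by auto
  have u: "\<Union>(insert (insert x B) (\<pi> - {B})) = insert x A"
    using B assms(1) unfolding pon_iff by auto
  have d: "\<forall>X\<in>insert (insert x B) (\<pi> - {B}). \<forall>Y\<in>insert (insert x B) (\<pi> - {B}). X \<noteq> Y \<longrightarrow> X \<inter> Y = {}"
  proof (intro ballI impI)
    fix X Y assume X: "X \<in> insert (insert x B) (\<pi> - {B})" and Y: "Y \<in> insert (insert x B) (\<pi> - {B})" and "X \<noteq> Y"
    have xn: "\<And>Z. Z \<in> \<pi> \<Longrightarrow> x \<notin> Z" using assms(1,2) unfolding pon_iff by auto
    have dj: "\<And>Z Z'. Z \<in> \<pi> \<Longrightarrow> Z' \<in> \<pi> \<Longrightarrow> Z \<noteq> Z' \<Longrightarrow> Z \<inter> Z' = {}" using assms(1) unfolding pon_iff by auto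
    have "X = insert x B \<and> Y \<in> \<pi> - {B} \<or> Y = insert x B \<and> X \<in> \<pi> - {B} \<or> X \<in> \<pi> - {B} \<and> Y \<in> \<pi> - {B}"
      using X Y \<open>X \<noteq> Y\<close> by auto
    then show "X \<inter> Y = {}"
    proof (elim disjE conjE)
      assume "X = insert x B" "Y \<in> \<pi> - {B}"
      then show ?thesis using dj[OF B, of Y] xn[of Y] by auto
    next
      assume "Y = insert x B" "X \<in> \<pi> - {B}"
      then show ?thesis using dj[OF B, of X] xn[of X] by auto
    next
      assume "X \<in> \<pi> - {B}" "Y \<in> \<pi> - {B}"
      then show ?thesis using dj[of X Y] \<open>X \<noteq> Y\<close> by auto
    qed
  qed
  show ?thesis using False u d assms(1) unfolding pon_iff add_to_def by auto
qed

lemma rem_add_to: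
  assumes "partition_on A \<pi>" "x \<notin> A" "B \<in> insert {} \<pi>"
  shows "rem x (add_to x \<pi> B) = \<pi>"
proof (cases "B = {}")
  case True
  have "(\<lambda>X. X - {x}) ` \<pi> = \<pi>"
  proof -
    have "\<And>X. X \<in> \<pi> \<Longrightarrow> X - {x} = X" using assms(1,2) unfolding pon_iff by auto
    then show ?thesis by (simp add: image_cong)
  qed
  then show ?thesis using True assms(1) unfolding rem_def add_to_def pon_iff by auto
next
  case False
  then have B: "B \<in> \<pi>" using assms(3) by auto
  have "\<And>X. X \<in> \<pi> \<Longrightarrow> X - {x} = X" using assms(1,2) unfolding pon_iff by auto
  then have e: "(\<lambda>X. X - {x}) ` (\<pi> - {B}) = \<pi> - {B}" by (simp add: image_cong)
  have "insert x B - {x} = B" using B assms(1,2) unfolding pon_iff by auto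
  then show ?thesis using False B e assms(1) unfolding rem_def add_to_def pon_iff by auto
qed

lemma add_to_inj_B:
  assumes "partition_on A \<pi>" "x \<notin> A" "B \<in> insert {} \<pi>" "B' \<in> insert {} \<pi>"
    and "add_to x \<pi> B = add_to x \<pi> B'"
  shows "B = B'"
proof -
  have key: "\<And>B. B \<in> insert {} \<pi> \<Longrightarrow> {X \<in> add_to x \<pi> B. x \<in> X} = {insert x B}"
    using assms(1,2) unfolding pon_iff add_to_def by auto
  have "{insert x B} = {insert x B'}" using key[OF assms(3)] key[OF assms(4)] assms(5) by simp
  then have "insert x B = insert x B'" by simp
  moreover have "x \<notin> B" "x \<notin> B'" using assms(1-4) unfolding pon_iff by auto
  ultimately show ?thesis by (metis insert_ident)
qed

lemma rem_part:
  assumes "partition_on (insert x A) \<rho>" "x \<notin> A"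
  shows "partition_on A (rem x \<rho>)"
proof -
  have xn: "\<Union>(rem x \<rho>) = A"
  proof
    show "\<Union>(rem x \<rho>) \<subseteq> A" using assms unfolding pon_iff rem_def by auto
    show "A \<subseteq> \<Union>(rem x \<rho>)"
    proof
      fix a assume "a \<in> A"
      then obtain X where X: "X \<in> \<rho>" "a \<in> X" using assms unfolding pon_iff by blast
      then have "a \<in> X - {x}" "X - {x} \<in> rem x \<rho>" using \<open>a \<in> A\<close> assms(2) unfolding rem_def by auto
      then show "a \<in> \<Union>(rem x \<rho>)" by blast
    qed
  qed
  have dj: "\<forall>X\<in>rem x \<rho>. \<forall>Y\<in>rem x \<rho>. X \<noteq> Y \<longrightarrow> X \<inter> Y = {}"
  proof (intro ballI impI)
    fix X Y assume "X \<in> rem x \<rho>" "Y \<in> rem x \<rho>" "X \<noteq> Y"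
    then obtain X' Y' where "X' \<in> \<rho>" "Y' \<in> \<rho>" "X = X' - {x}" "Y = Y' - {x}" unfolding rem_def by auto
    then show "X \<inter> Y = {}" using assms(1) \<open>X \<noteq> Y\<close> unfolding pon_iff by blast
  qed
  show ?thesis unfolding pon_iff using xn dj by (auto simp: rem_def)
qed

lemma add_to_rem:
  assumes "partition_on (insert x A) \<rho>" "x \<notin> A"
  shows "\<exists>B\<in>insert {} (rem x \<rho>). \<rho> = add_to x (rem x \<rho>) B"
proof -
  obtain C where C: "C \<in> \<rho>" "x \<in> C" using assms(1) unfolding pon_iff by (metis UnionE insertI1)
  have uniq: "\<And>D. D \<in> \<rho> \<Longrightarrow> x \<in> D \<Longrightarrow> D = C" using assms(1) C unfolding pon_iff by blast
  have oth: "\<And>D. D \<in> \<rho> \<Longrightarrow> D \<noteq> C \<Longrightarrow> D - {x} = D" using uniq by blast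
  show ?thesis
  proof (cases "C = {x}")
    case True
    have "rem x \<rho> = \<rho> - {C}"
    proof
      show "rem x \<rho> \<subseteq> \<rho> - {C}"
      proof
        fix Y assume "Y \<in> rem x \<rho>"
        then obtain X where X: "X \<in> \<rho>" "Y = X - {x}" "Y \<noteq> {}" unfolding rem_def by auto
        then have "X \<noteq> C" using True by auto
        then show "Y \<in> \<rho> - {C}" using X oth[of X] by auto
      qed
      show "\<rho> - {C} \<subseteq> rem x \<rho>" unfolding rem_def using oth True assms(1) unfolding pon_iff
        by (auto simp: image_iff) (metis Diff_empty Diff_insert0 insert_Diff singletonD)
    qed
    then have "\<rho> = add_to x (rem x \<rho>) {}" unfolding add_to_def using C True by auto
    then show ?thesis by auto
  next
    case False
    define B where "B = C - {x}"
    have Bne: "B \<noteq> {}" using False C unfolding B_def by auto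
    have "rem x \<rho> = insert B (\<rho> - {C})"
    proof
      show "rem x \<rho> \<subseteq> insert B (\<rho> - {C})"
      proof
        fix Y assume "Y \<in> rem x \<rho>"
        then obtain X where X: "X \<in> \<rho>" "Y = X - {x}" unfolding rem_def by auto
        show "Y \<in> insert B (\<rho> - {C})"
        proof (cases "X = C")
          case True then show ?thesis using X unfolding B_def by auto
        next
          case False then show ?thesis using X oth[of X] by auto
        qed
      qed
      show "insert B (\<rho> - {C}) \<subseteq> rem x \<rho>"
      proof
        fix Y assume Y: "Y \<in> insert B (\<rho> - {C})"
        show "Y \<in> rem x \<rho>"
        proof (cases "Y = B")
          case True then show ?thesis using C Bne unfolding rem_def B_def by auto
        next
          case False
          then have "Y \<in> \<rho>" "Y \<noteq> C" using Y by auto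
          moreover have "Y \<noteq> {}" using \<open>Y \<in> \<rho>\<close> assms(1) unfolding pon_iff by auto
          ultimately show ?thesis using oth[of Y] unfolding rem_def by (auto simp: image_iff intro!: bexI[of _ Y])
        qed
      qed
    qed
    moreover have "B \<notin> \<rho> - {C}"
    proof
      assume "B \<in> \<rho> - {C}"
      then have "B \<inter> C = {}" using C assms(1) unfolding pon_iff by auto
      then show False using Bne unfolding B_def by auto
    qed
    ultimately have "rem x \<rho> - {B} = \<rho> - {C}" by auto
    then have "add_to x (rem x \<rho>) B = \<rho>" unfolding add_to_def using Bne C unfolding B_def
      by (auto simp: insert_absorb)
    moreover have "B \<in> insert {} (rem x \<rho>)" using \<open>rem x \<rho> = _\<close> by auto
    ultimately show ?thesis by metis
  qed
qed

lemma finite_partitions: "finite A \<Longrightarrow> finite (partitions A)"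
  unfolding partitions_def by (rule finitely_many_partition_on)

lemma decomp:
  assumes "finite A" "x \<notin> A"
  shows "(\<Sum>\<rho>\<in>partitions (insert x A). f \<rho>) =
         (\<Sum>\<pi>\<in>partitions A. \<Sum>B\<in>insert {} \<pi>. f (add_to x \<pi> B))"
proof -
  let ?S = "Sigma (partitions A) (\<lambda>\<pi>. insert {} \<pi>)"
  have fin: "finite ?S"
    using assms(1) finite_partitions by (auto intro!: finite_SigmaI simp: partitions_def finite_elements)
  have "(\<Sum>\<pi>\<in>partitions A. \<Sum>B\<in>insert {} \<pi>. f (add_to x \<pi> B)) = (\<Sum>(\<pi>,B)\<in>?S. f (add_to x \<pi> B))"
    using assms(1) finite_partitions
    by (subst sum.Sigma) (auto simp: partitions_def finite_elements)
  also have "\<dots> = (\<Sum>\<rho>\<in>partitions (insert x A). f \<rho>)"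
  proof -
    have bij: "bij_betw (\<lambda>(\<pi>, B). add_to x \<pi> B) ?S (partitions (insert x A))"
    proof (rule bij_betw_imageI)
      show "inj_on (\<lambda>(\<pi>, B). add_to x \<pi> B) ?S"
      proof (rule inj_onI, clarify)
        fix \<pi> B \<pi>' B'
        assume a: "\<pi> \<in> partitions A" "B \<in> insert {} \<pi>" "\<pi>' \<in> partitions A" "B' \<in> insert {} \<pi>'"
          "add_to x \<pi> B = add_to x \<pi>' B'"
        have "\<pi> = \<pi>'" using rem_add_to[of A \<pi> x B] rem_add_to[of A \<pi>' x B'] a assms
          by (auto simp: partitions_def)
        then show "\<pi> = \<pi>' \<and> B = B'" using add_to_inj_B[of A \<pi> x B B'] a assms by (auto simp: partitions_def)
      qed
      show "(\<lambda>(\<pi>, B). add_to x \<pi> B) ` ?S = partitions (insert x A)"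
      proof
        show "(\<lambda>(\<pi>, B). add_to x \<pi> B) ` ?S \<subseteq> partitions (insert x A)"
          using assms by (auto simp: partitions_def intro!: add_to_part)
        show "partitions (insert x A) \<subseteq> (\<lambda>(\<pi>, B). add_to x \<pi> B) ` ?S"
        proof
          fix \<rho> assume "\<rho> \<in> partitions (insert x A)"
          then have r: "partition_on (insert x A) \<rho>" by (simp add: partitions_def)
          obtain B where "B \<in> insert {} (rem x \<rho>)" "\<rho> = add_to x (rem x \<rho>) B"
            using add_to_rem[OF r assms(2)] by blast
          moreover have "rem x \<rho> \<in> partitions A" using rem_part[OF r assms(2)] by (simp add: partitions_def)
          ultimately show "\<rho> \<in> (\<lambda>(\<pi>, B). add_to x \<pi> B) ` ?S" by (auto simp: image_iff)
        qed
      qed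
    qed
    show ?thesis using sum.reindex_bij_betw[OF bij, of f] by (simp add: case_prod_beta)
  qed
  finally show ?thesis by simp
qed

definition wt :: "'a set \<Rightarrow> real" where "wt B = (if B = {} then 1 else real (card B))"

definition pf :: "'a set set \<Rightarrow> real" where "pf \<pi> = (\<Prod>X\<in>\<pi>. fact (card X - 1))"

lemma pf_pos: "finite \<pi> \<Longrightarrow> pf \<pi> > 0"
  unfolding pf_def by (rule prod_pos) auto

lemma ewens_pf: "ewens N \<pi> = pf \<pi> / fact (card N)"
  unfolding ewens_def pf_def by simp

lemma pf_add_to:
  assumes "partition_on A \<pi>" "finite A" "x \<notin> A" "B \<in> insert {} \<pi>"
  shows "pf (add_to x \<pi> B) = wt B * pf \<pi>"
proof -
  have fin: "finite \<pi>" using assms(1,2) finite_elements by blast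
  have xn: "\<And>X. X \<in> \<pi> \<Longrightarrow> x \<notin> X" using assms(1,3) unfolding pon_iff by auto
  show ?thesis
  proof (cases "B = {}")
    case True
    have "{x} \<notin> \<pi>" using xn by auto
    then show ?thesis using True fin unfolding pf_def add_to_def wt_def by simp
  next
    case False
    then have B: "B \<in> \<pi>" using assms(4) by auto
    have finB: "finite B" using B assms(1,2) unfolding pon_iff by (metis Union_upper finite_subset)
    have cB: "card B > 0" using finB False by auto
    have ni: "insert x B \<notin> \<pi> - {B}" using xn by auto
    have "pf (add_to x \<pi> B) = fact (card (insert x B) - 1) * pf (\<pi> - {B})"
      using False fin ni unfolding pf_def add_to_def by simp
    also have "card (insert x B) - 1 = card B" using finB xn[OF B] by simp
    also have "pf \<pi> = fact (card B - 1) * pf (\<pi> - {B})"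
      unfolding pf_def using prod.remove[OF fin B] by simp
    ultimately show ?thesis using False fact_reduce[OF cB, where 'a=real] unfolding wt_def by simp
  qed
qed

lemma sum_card_part:
  assumes "partition_on A \<pi>" "finite A"
  shows "(\<Sum>X\<in>\<pi>. card X) = card A"
proof -
  have "card (\<Union>\<pi>) = sum card \<pi>"
    using assms by (intro card_Union_disjoint) (auto simp: partition_on_def intro: finite_subset)
  then show ?thesis using assms(1) unfolding partition_on_def by simp
qed

lemma sum_wt:
  assumes "partition_on A \<pi>" "finite A"
  shows "(\<Sum>B\<in>insert {} \<pi>. wt B) = real (card A) + 1"
proof -
  have fin: "finite \<pi>" using assms finite_elements by blast
  have ne: "{} \<notin> \<pi>" using assms(1) unfolding partition_on_def by auto
  have "(\<Sum>B\<in>\<pi>. wt B) = (\<Sum>B\<in>\<pi>. real (card B))"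
    using ne by (intro sum.cong) (auto simp: wt_def)
  also have "\<dots> = real (card A)" using sum_card_part[OF assms] by (simp flip: of_nat_sum)
  finally show ?thesis using fin ne by (simp add: wt_def)
qed

lemma ewens_add_to:
  assumes "partition_on A \<pi>" "finite A" "x \<notin> A" "B \<in> insert {} \<pi>"
  shows "ewens (insert x A) (add_to x \<pi> B) = ewens A \<pi> * wt B / (real (card A) + 1)"
proof -
  have "fact (card (insert x A)) = (real (card A) + 1) * (fact (card A) :: real)"
    using assms(2,3) by simp
  then show ?thesis unfolding ewens_pf pf_add_to[OF assms] by (simp add: field_simps)
qed

lemma sum_pf: "finite A \<Longrightarrow> (\<Sum>\<pi>\<in>partitions A. pf \<pi>) = fact (card A)"
proof (induction A rule: finite_induct)
  case empty
  have "partitions ({}::'a set) = {{}}" unfolding partitions_def by (auto simp: partition_on_empty)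
  then show ?case by (simp only:) (simp add: pf_def)
next
  case (insert x A)
  have "(\<Sum>\<rho>\<in>partitions (insert x A). pf \<rho>) = (\<Sum>\<pi>\<in>partitions A. \<Sum>B\<in>insert {} \<pi>. pf (add_to x \<pi> B))"
    by (rule decomp[OF insert(1,2)])
  also have "\<dots> = (\<Sum>\<pi>\<in>partitions A. (real (card A) + 1) * pf \<pi>)"
  proof (rule sum.cong[OF refl])
    fix \<pi> assume "\<pi> \<in> partitions A"
    then have p: "partition_on A \<pi>" by (simp add: partitions_def)
    have "(\<Sum>B\<in>insert {} \<pi>. pf (add_to x \<pi> B)) = (\<Sum>B\<in>insert {} \<pi>. wt B * pf \<pi>)"
      by (rule sum.cong[OF refl]) (rule pf_add_to[OF p insert(1,2)])
    also have "\<dots> = (real (card A) + 1) * pf \<pi>" by (simp add: sum_distrib_right[symmetric] sum_wt[OF p insert(1)])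
    finally show "(\<Sum>B\<in>insert {} \<pi>. pf (add_to x \<pi> B)) = (real (card A) + 1) * pf \<pi>" .
  qed
  also have "\<dots> = fact (card (insert x A))"
    using insert by (simp add: sum_distrib_left[symmetric])
  finally show ?case .
qed

lemma sum_ewens: "finite A \<Longrightarrow> (\<Sum>\<pi>\<in>partitions A. ewens A \<pi>) = 1"
  unfolding ewens_pf by (simp add: sum_divide_distrib[symmetric] sum_pf)

lemma ewens_pos: "finite A \<Longrightarrow> partition_on A \<pi> \<Longrightarrow> ewens A \<pi> > 0"
  unfolding ewens_pf using pf_pos finite_elements by (metis divide_pos_pos fact_gt_zero)

lemma blocks_bij:
  assumes "finite N"
  shows "(\<Sum>\<pi>\<in>partitions N. \<Sum>S\<in>\<pi>. g S (\<pi> - {S})) =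
         (\<Sum>S\<in>{S. S \<subseteq> N \<and> S \<noteq> {}}. \<Sum>\<tau>\<in>partitions (N - S). g S \<tau>)"
proof -
  let ?S1 = "Sigma (partitions N) (\<lambda>\<pi>. \<pi>)"
  let ?S2 = "Sigma {S. S \<subseteq> N \<and> S \<noteq> {}} (\<lambda>S. partitions (N - S))"
  have finP: "\<And>A. finite A \<Longrightarrow> finite (partitions A)" by (rule finite_partitions)
  have l: "(\<Sum>\<pi>\<in>partitions N. \<Sum>S\<in>\<pi>. g S (\<pi> - {S})) = (\<Sum>(\<pi>,S)\<in>?S1. g S (\<pi> - {S}))"
    using assms finP by (subst sum.Sigma) (auto simp: partitions_def finite_elements)
  have r: "(\<Sum>S\<in>{S. S \<subseteq> N \<and> S \<noteq> {}}. \<Sum>\<tau>\<in>partitions (N - S). g S \<tau>) = (\<Sum>(S,\<tau>)\<in>?S2. g S \<tau>)"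
    using assms finP by (subst sum.Sigma) auto
  have bij: "bij_betw (\<lambda>(\<pi>,S). (S, \<pi> - {S})) ?S1 ?S2"
  proof (rule bij_betw_imageI)
    show "inj_on (\<lambda>(\<pi>,S). (S, \<pi> - {S})) ?S1"
    proof (rule inj_onI)
      fix a b assume a: "a \<in> ?S1" "b \<in> ?S1" "(\<lambda>(\<pi>,S). (S, \<pi> - {S})) a = (\<lambda>(\<pi>,S). (S, \<pi> - {S})) b"
      obtain \<pi> S \<pi>' S' where ab: "a = (\<pi>, S)" "b = (\<pi>', S')" by (cases a, cases b) auto
      have "S \<in> \<pi>" "S' \<in> \<pi>'" "S = S'" "\<pi> - {S} = \<pi>' - {S'}" using a unfolding ab by auto
      then show "a = b" unfolding ab by (metis insert_Diff)
    qed
    show "(\<lambda>(\<pi>,S). (S, \<pi> - {S})) ` ?S1 = ?S2"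
    proof
      show "(\<lambda>(\<pi>,S). (S, \<pi> - {S})) ` ?S1 \<subseteq> ?S2"
      proof
        fix y assume "y \<in> (\<lambda>(\<pi>,S). (S, \<pi> - {S})) ` ?S1"
        then obtain \<pi> S where a: "\<pi> \<in> partitions N" "S \<in> \<pi>" and y: "y = (S, \<pi> - {S})" by auto
        then have p: "partition_on N \<pi>" by (simp add: partitions_def)
        have "partition_on (N - S) (\<pi> - {S})"
          using p a(2) unfolding pon_iff by blast
        moreover have "S \<subseteq> N" "S \<noteq> {}" using p a(2) unfolding pon_iff by auto
        ultimately show "y \<in> ?S2" unfolding y by (simp add: partitions_def)
      qed
      show "?S2 \<subseteq> (\<lambda>(\<pi>,S). (S, \<pi> - {S})) ` ?S1"
      proof
        fix y assume "y \<in> ?S2"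
        then obtain S \<tau> where a: "S \<subseteq> N" "S \<noteq> {}" "\<tau> \<in> partitions (N - S)" and y: "y = (S, \<tau>)" by auto
        then have p: "partition_on (N - S) \<tau>" by (simp add: partitions_def)
        have Sn: "S \<notin> \<tau>" using p a(2) unfolding pon_iff by auto
        have "disjnt S (\<Union>\<tau>)" using p unfolding partition_on_def disjnt_def by auto
        then have "partition_on N (insert S \<tau>)" using p a(1,2) partition_on_insert by blast
        then have "(insert S \<tau>, S) \<in> ?S1" by (simp add: partitions_def)
        moreover have "(S, \<tau>) = (\<lambda>(\<pi>,S). (S, \<pi> - {S})) (insert S \<tau>, S)" using Sn by simp
        ultimately show "y \<in> (\<lambda>(\<pi>,S). (S, \<pi> - {S})) ` ?S1" unfolding y by blast
      qed
    qed
  qed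
  show ?thesis unfolding l r using sum.reindex_bij_betw[OF bij, of "\<lambda>(S,\<tau>). g S \<tau>"]
    by (simp add: case_prod_beta)
qed

lemma ewens_insert_block:
  assumes "finite N" "S \<subseteq> N" "S \<noteq> {}" "partition_on (N - S) \<tau>"
  shows "ewens N (insert S \<tau>) = fact (card S - 1) * fact (card N - card S) / fact (card N) * ewens (N - S) \<tau>"
proof -
  have Sn: "S \<notin> \<tau>" using assms(3,4) unfolding pon_iff by auto
  have fin: "finite \<tau>" using assms(1,4) finite_elements by blast
  have "pf (insert S \<tau>) = fact (card S - 1) * pf \<tau>" using Sn fin unfolding pf_def by simp
  moreover have "card (N - S) = card N - card S" using assms(1,2) by (simp add: card_Diff_subset finite_subset)
  ultimately show ?thesis unfolding ewens_pf by simp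
qed

lemma card_minus_eq:
  assumes "finite N" "x \<in> N" "S \<subseteq> N - {x}"
  shows "card N - card S = card (N - {x} - S) + 1"
proof -
  have SN: "S \<subseteq> N" using assms(3) by auto
  have "card N - card S = card (N - S)" using assms(1) SN by (metis card_Diff_subset finite_subset)
  also have "N - S = insert x (N - {x} - S)" using assms by auto
  also have "card \<dots> = card (N - {x} - S) + 1" using assms by simp
  finally show ?thesis .
qed

lemma r_star_alt:
  assumes "finite N" "x \<in> N" "S \<subseteq> N - {x}" "partition_on (N - {x} - S) \<tau>"
  shows "r_star N w x S \<tau> = (\<Sum>B\<in>insert {} \<tau>. wt B * w S (add_to x \<tau> B)) / (real (card (N - {x} - S)) + 1)"
proof -
  have c: "real (card N - card S) = real (card (N - {x} - S)) + 1" using card_minus_eq[OF assms(1-3)] by simp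
  have fin: "finite \<tau>" using assms(1,4) finite_elements by blast
  have ne: "{} \<notin> \<tau>" using assms(4) unfolding partition_on_def by auto
  have "(\<Sum>B\<in>insert {} \<tau>. wt B * w S (add_to x \<tau> B)) = w S (add_to x \<tau> {}) + (\<Sum>B\<in>\<tau>. real (card B) * w S (add_to x \<tau> B))"
  proof -
    have "(\<Sum>B\<in>\<tau>. wt B * w S (add_to x \<tau> B)) = (\<Sum>B\<in>\<tau>. real (card B) * w S (add_to x \<tau> B))"
      using ne by (intro sum.cong[OF refl]) (auto simp: wt_def)
    then show ?thesis using fin ne by (simp add: wt_def)
  qed
  then show ?thesis unfolding r_star_def c by (simp add: add_divide_distrib sum_divide_distrib)
qed

lemma r_star_ew:
  assumes "finite N" "x \<in> N" "S \<subseteq> N - {x}" "partition_on (N - {x} - S) \<tau>"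
  shows "ewens (N - {x} - S) \<tau> * r_star N w x S \<tau> =
     (\<Sum>B\<in>insert {} \<tau>. ewens (N - S) (add_to x \<tau> B) * w S (add_to x \<tau> B))"
proof -
  let ?A = "N - {x} - S"
  have ins: "N - S = insert x ?A" using assms by auto
  have finA: "finite ?A" using assms by auto
  have x: "x \<notin> ?A" by auto
  have eq: "\<And>B. B \<in> insert {} \<tau> \<Longrightarrow> ewens ?A \<tau> * (wt B * w S (add_to x \<tau> B) / (real (card ?A) + 1)) =
      ewens (insert x ?A) (add_to x \<tau> B) * w S (add_to x \<tau> B)"
    using ewens_add_to[OF assms(4) finA x] by simp
  show ?thesis unfolding r_star_alt[OF assms] ins sum_distrib_left sum_divide_distrib
    by (rule sum.cong[OF refl]) (rule eq)
qed

lemma rl_star: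
  "finite N \<Longrightarrow> S \<subseteq> N \<Longrightarrow> distinct xs \<Longrightarrow> set xs = N - S \<Longrightarrow>
   restr_list r_star N w xs S {} = (\<Sum>\<tau>\<in>partitions (N - S). ewens (N - S) \<tau> * w S \<tau>)"
proof (induction xs arbitrary: N w)
  case Nil
  then have e: "N - S = {}" by simp
  have p0: "partitions ({}::'a set) = {{}}" unfolding partitions_def by (auto simp: partition_on_empty)
  show ?case unfolding e p0 by (simp add: ewens_def)
next
  case (Cons x xs)
  have x: "x \<in> N" "x \<notin> S" using Cons.prems by auto
  let ?A = "N - {x} - S"
  have xs: "distinct xs" "set xs = N - {x} - S" using Cons.prems by auto
  have "restr_list r_star N w (x # xs) S {} = restr_list r_star (N - {x}) (r_star N w x) xs S {}" by simp
  also have "\<dots> = (\<Sum>\<tau>\<in>partitions ?A. ewens ?A \<tau> * r_star N w x S \<tau>)"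
  proof -
    have "finite (N - {x})" "S \<subseteq> N - {x}" using Cons.prems x by auto
    from Cons.IH[OF this(1) this(2) xs] show ?thesis by (simp add: Diff_insert2[symmetric] insert_commute)
  qed
  also have "\<dots> = (\<Sum>\<tau>\<in>partitions ?A. \<Sum>B\<in>insert {} \<tau>. ewens (N - S) (add_to x \<tau> B) * w S (add_to x \<tau> B))"
    using Cons.prems x by (intro sum.cong[OF refl] r_star_ew) (auto simp: partitions_def)
  also have "\<dots> = (\<Sum>\<rho>\<in>partitions (insert x ?A). ewens (N - S) \<rho> * w S \<rho>)"
    using Cons.prems by (intro decomp[symmetric]) auto
  also have "insert x ?A = N - S" using x by auto
  finally show ?case .
qed

lemma aux_star:
  assumes "finite N" "S \<subseteq> N"
  shows "aux_game r_star N w S = (\<Sum>\<tau>\<in>partitions (N - S). ewens (N - S) \<tau> * w S \<tau>)"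
proof -
  have "\<exists>xs. distinct xs \<and> set xs = N - S" using finite_distinct_list[of "N - S"] assms by auto
  then have "distinct (SOME xs. distinct xs \<and> set xs = N - S) \<and> set (SOME xs. distinct xs \<and> set xs = N - S) = N - S"
    by (rule someI_ex)
  then show ?thesis unfolding aux_game_def restr_set_def using rl_star assms by blast
qed

lemma pot_star:
  assumes "finite N"
  shows "pot_r r_star N w = expect ewens N w"
proof -
  have "pot_r r_star N w = (\<Sum>S\<in>{S. S \<subseteq> N \<and> S \<noteq> {}}. fact (card S - 1) * fact (card N - card S) / fact (card N) *
      (\<Sum>\<tau>\<in>partitions (N - S). ewens (N - S) \<tau> * w S \<tau>))"
    unfolding pot_r_def pot_def using assms by (intro sum.cong) (auto simp: aux_star)
  also have "\<dots> = (\<Sum>S\<in>{S. S \<subseteq> N \<and> S \<noteq> {}}. \<Sum>\<tau>\<in>partitions (N - S). ewens N (insert S \<tau>) * w S \<tau>)"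
  proof (intro sum.cong[OF refl])
    fix S assume S: "S \<in> {S. S \<subseteq> N \<and> S \<noteq> {}}"
    show "fact (card S - 1) * fact (card N - card S) / fact (card N) * (\<Sum>\<tau>\<in>partitions (N - S). ewens (N - S) \<tau> * w S \<tau>) =
          (\<Sum>\<tau>\<in>partitions (N - S). ewens N (insert S \<tau>) * w S \<tau>)"
      unfolding sum_distrib_left
    proof (intro sum.cong[OF refl])
      fix \<tau> assume "\<tau> \<in> partitions (N - S)"
      then have "ewens N (insert S \<tau>) = fact (card S - 1) * fact (card N - card S) / fact (card N) * ewens (N - S) \<tau>"
        using S assms by (intro ewens_insert_block) (auto simp: partitions_def)
      then show "fact (card S - 1) * fact (card N - card S) / fact (card N) * (ewens (N - S) \<tau> * w S \<tau>) =
          ewens N (insert S \<tau>) * w S \<tau>" by simp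
    qed
  qed
  also have "\<dots> = (\<Sum>\<pi>\<in>partitions N. \<Sum>S\<in>\<pi>. ewens N (insert S (\<pi> - {S})) * w S (\<pi> - {S}))"
    by (rule blocks_bij[OF assms, symmetric])
  also have "\<dots> = expect ewens N w"
    unfolding expect_def sum_distrib_left
  proof (intro sum.cong[OF refl])
    fix \<pi> S assume "\<pi> \<in> partitions N" "S \<in> \<pi>"
    then show "ewens N (insert S (\<pi> - {S})) * w S (\<pi> - {S}) = ewens N \<pi> * w S (\<pi> - {S})"
      by (simp add: insert_absorb)
  qed
  finally show ?thesis .
qed

lemma gen_pot_ewens: "finite U \<Longrightarrow> generates_potential U ewens"
  unfolding generates_potential_def
proof (intro allI impI)
  fix N and v :: "'a set \<Rightarrow> real" assume "finite U" "N \<subseteq> U" "v {} = 0"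
  then have fN: "finite N" using finite_subset by blast
  have "expect ewens N (\<lambda>S \<pi>. v S) = pot_r r_star N (\<lambda>S \<pi>. v S)" using pot_star[OF fN] by simp
  also have "\<dots> = pot N v" unfolding pot_r_def pot_def using fN
  proof (intro sum.cong[OF refl])
    fix S assume "S \<in> {S. S \<subseteq> N \<and> S \<noteq> {}}"
    then have S: "S \<subseteq> N" by auto
    have "aux_game r_star N (\<lambda>S \<pi>. v S) S = (\<Sum>\<tau>\<in>partitions (N - S). ewens (N - S) \<tau>) * v S"
      unfolding aux_star[OF fN S] sum_distrib_right ..
    also have "\<dots> = v S" using fN by (simp add: sum_ewens)
    finally show "fact (card S - 1) * fact (card N - card S) / fact (card N) * aux_game r_star N (\<lambda>S \<pi>. v S) S =
         fact (card S - 1) * fact (card N - card S) / fact (card N) * v S" by simp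
  qed
  finally show "expect ewens N (\<lambda>S \<pi>. v S) = pot N v" .
qed

lemma rp_ewens: "finite U \<Longrightarrow> random_partition U ewens"
  unfolding random_partition_def
proof (intro allI impI conjI ballI)
  fix N assume "finite U" "N \<subseteq> U"
  then have fN: "finite N" using finite_subset by blast
  show "(\<Sum>\<pi>\<in>partitions N. ewens N \<pi>) = 1" using sum_ewens[OF fN] .
  fix \<pi> assume "\<pi> \<in> partitions N"
  then show "ewens N \<pi> \<ge> 0" using ewens_pos[OF fN] by (simp add: partitions_def less_imp_le)
qed

lemma mpw_star:
  assumes "finite N" "i \<in> N"
  shows "shapley_r r_star N w i = mpw N w i"
  unfolding shapley_r_def mpw_def shapley_def
proof (intro sum.cong[OF refl])
  fix S assume "S \<in> {S. S \<subseteq> N - {i}}"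
  then have "S \<subseteq> N" "insert i S \<subseteq> N" using assms by auto
  then show "fact (card S) * fact (card N - card S - 1) / fact (card N) * (aux_game r_star N w (insert i S) - aux_game r_star N w S) =
    fact (card S) * fact (card N - card S - 1) / fact (card N) *
    ((\<Sum>\<pi>\<in>partitions (N - insert i S). ewens (N - insert i S) \<pi> * w (insert i S) \<pi>) -
     (\<Sum>\<pi>\<in>partitions (N - S). ewens (N - S) \<pi> * w S \<pi>))"
    using aux_star[OF assms(1)] by simp
qed

lemma rem_comm: "rem j (rem i \<rho>) = rem i (rem j \<rho>)"
proof -
  have "\<And>i j. rem j (rem i \<rho>) = (\<lambda>X. X - {i, j}) ` \<rho> - {{}}"
    unfolding rem_def by (auto simp: image_iff)
  then show ?thesis by (metis insert_commute)
qed

lemma ro_star: "restriction_operator U r_star"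
  unfolding restriction_operator_def
proof (intro allI impI conjI)
  fix N w i assume a: "N \<subseteq> U" "tux_game N w" "i \<in> N"
  have Ni: "insert i (N - {i}) = N" using a(3) by auto
  show "tux_game (N - {i}) (r_star N w i)" unfolding tux_game_def
  proof (intro allI impI)
    fix \<pi> assume p: "partition_on (N - {i}) \<pi>"
    have z: "\<And>B. B \<in> insert {} \<pi> \<Longrightarrow> w {} (add_to i \<pi> B) = 0"
      using a(2) add_to_part[OF p, of i] Ni unfolding tux_game_def by auto
    have "(\<Sum>B\<in>\<pi>. real (card B) / real (card N - card {}) * w {} (add_to i \<pi> B)) = 0"
      using z by (intro sum.neutral) auto
    then show "r_star N w i {} \<pi> = 0" unfolding r_star_def using z by simp
  qed
  fix w' S \<pi> assume "tux_game N w'" "embedded (N - {i}) S \<pi>"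
    "\<forall>B\<in>insert {} \<pi>. w S (add_to i \<pi> B) = w' S (add_to i \<pi> B)"
  then show "r_star N w i S \<pi> = r_star N w' i S \<pi>" unfolding r_star_def by (auto intro!: sum.cong)
qed

lemma pn_star: "preserves_null U r_star"
  unfolding preserves_null_def r_star_def by simp

lemma null_star:
  assumes "finite U"
  shows "null_player_property U (shapley_r r_star)"
  unfolding null_player_property_def
proof (intro allI impI)
  fix N w i assume a: "N \<subseteq> U" "tux_game N w" "i \<in> N" "null_player N w i"
  have fN: "finite N" using a(1) assms finite_subset by blast
  show "shapley_r r_star N w i = 0" unfolding shapley_r_def shapley_def
  proof (intro sum.neutral ballI)
    fix S assume "S \<in> {S. S \<subseteq> N - {i}}"
    then have S: "S \<subseteq> N - {i}" by auto
    let ?A = "N - {i} - S"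
    have e1: "N - insert i S = ?A" by auto
    have e2: "N - S = insert i ?A" using S a(3) by auto
    have finA: "finite ?A" using fN by auto
    have iA: "i \<notin> ?A" by auto
    have "aux_game r_star N w S = (\<Sum>\<rho>\<in>partitions (insert i ?A). ewens (insert i ?A) \<rho> * w S \<rho>)"
      using aux_star[OF fN, of S] S e2 by auto
    also have "\<dots> = (\<Sum>\<tau>\<in>partitions ?A. \<Sum>B\<in>insert {} \<tau>. ewens (insert i ?A) (add_to i \<tau> B) * w S (add_to i \<tau> B))"
      by (rule decomp[OF finA iA])
    also have "\<dots> = (\<Sum>\<tau>\<in>partitions ?A. ewens ?A \<tau> * w (insert i S) \<tau>)"
    proof (intro sum.cong[OF refl])
      fix \<tau> assume "\<tau> \<in> partitions ?A"
      then have p: "partition_on ?A \<tau>" by (simp add: partitions_def)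
      have emb: "embedded (N - {i}) S \<tau>" unfolding embedded_def using S p by auto
      have "(\<Sum>B\<in>insert {} \<tau>. ewens (insert i ?A) (add_to i \<tau> B) * w S (add_to i \<tau> B)) =
            (\<Sum>B\<in>insert {} \<tau>. wt B * (ewens ?A \<tau> * w (insert i S) \<tau> / (real (card ?A) + 1)))"
      proof (intro sum.cong[OF refl])
        fix B assume B: "B \<in> insert {} \<tau>"
        then have "w (insert i S) \<tau> = w S (add_to i \<tau> B)" using a(4) emb unfolding null_player_def by blast
        then show "ewens (insert i ?A) (add_to i \<tau> B) * w S (add_to i \<tau> B) =
            wt B * (ewens ?A \<tau> * w (insert i S) \<tau> / (real (card ?A) + 1))"
          using ewens_add_to[OF p finA iA B] by simp
      qed
      also have "\<dots> = ewens ?A \<tau> * w (insert i S) \<tau>"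
        unfolding sum_distrib_right[symmetric] sum_wt[OF p finA]
        by (simp add: field_simps add_pos_nonneg)
      finally show "(\<Sum>B\<in>insert {} \<tau>. ewens (insert i ?A) (add_to i \<tau> B) * w S (add_to i \<tau> B)) =
           ewens ?A \<tau> * w (insert i S) \<tau>" .
    qed
    also have "\<dots> = aux_game r_star N w (insert i S)"
    proof -
      have "insert i S \<subseteq> N" using S a(3) by auto
      from aux_star[OF fN this, of w] show ?thesis unfolding e1 by simp
    qed
    finally show "fact (card S) * fact (card N - card S - 1) / fact (card N) *
      (aux_game r_star N w (insert i S) - aux_game r_star N w S) = 0" by simp
  qed
qed

lemma cond_star:
  assumes "finite N" "x \<in> N" "S \<subseteq> N - {x}" "partition_on (N - {x} - S) \<tau>"
  shows "ewens (N - {x} - S) \<tau> * r_star N w x S \<tau> =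
     (\<Sum>\<rho>\<in>{\<rho>\<in>partitions (N - S). rem x \<rho> = \<tau>}. ewens (N - S) \<rho> * w S \<rho>)"
proof -
  let ?A = "N - {x} - S"
  let ?f = "\<lambda>\<rho>. ewens (N - S) \<rho> * w S \<rho>"
  have ins: "N - S = insert x ?A" using assms by auto
  have finA: "finite ?A" using assms by auto
  have xA: "x \<notin> ?A" by auto
  have "(\<Sum>\<rho>\<in>{\<rho>\<in>partitions (N - S). rem x \<rho> = \<tau>}. ?f \<rho>) =
        (\<Sum>\<rho>\<in>partitions (insert x ?A). if rem x \<rho> = \<tau> then ?f \<rho> else 0)"
    unfolding ins by (rule sum.inter_filter) (simp add: finite_partitions finA)
  also have "\<dots> = (\<Sum>\<pi>\<in>partitions ?A. \<Sum>B\<in>insert {} \<pi>. if rem x (add_to x \<pi> B) = \<tau> then ?f (add_to x \<pi> B) else 0)"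
    by (rule decomp[OF finA xA])
  also have "\<dots> = (\<Sum>\<pi>\<in>partitions ?A. if \<pi> = \<tau> then (\<Sum>B\<in>insert {} \<pi>. ?f (add_to x \<pi> B)) else 0)"
  proof (intro sum.cong[OF refl])
    fix \<pi> assume "\<pi> \<in> partitions ?A"
    then have p: "partition_on ?A \<pi>" by (simp add: partitions_def)
    show "(\<Sum>B\<in>insert {} \<pi>. if rem x (add_to x \<pi> B) = \<tau> then ?f (add_to x \<pi> B) else 0) =
          (if \<pi> = \<tau> then (\<Sum>B\<in>insert {} \<pi>. ?f (add_to x \<pi> B)) else 0)"
      using rem_add_to[OF p xA] by (auto intro!: sum.neutral)
  qed
  also have "\<dots> = (\<Sum>B\<in>insert {} \<tau>. ?f (add_to x \<tau> B))"
  proof -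
    have "\<tau> \<in> partitions ?A" using assms(4) by (simp add: partitions_def)
    then show ?thesis by (simp add: sum.delta finite_partitions[OF finA])
  qed
  also have "\<dots> = ewens (N - {x} - S) \<tau> * r_star N w x S \<tau>"
    using r_star_ew[OF assms] by simp
  finally show ?thesis by simp
qed

lemma double_star:
  assumes "finite N" "i \<in> N" "j \<in> N" "i \<noteq> j" "S \<subseteq> N - {i, j}" "partition_on (N - {i, j} - S) \<pi>"
  shows "ewens (N - {i, j} - S) \<pi> * r_star (N - {i}) (r_star N w i) j S \<pi> =
     (\<Sum>\<rho>\<in>{\<rho>\<in>partitions (N - S). rem j (rem i \<rho>) = \<pi>}. ewens (N - S) \<rho> * w S \<rho>)"
proof -
  let ?f = "\<lambda>\<rho>. ewens (N - S) \<rho> * w S \<rho>"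
  have e: "N - {i} - {j} - S = N - {i, j} - S" by auto
  have "ewens (N - {i, j} - S) \<pi> * r_star (N - {i}) (r_star N w i) j S \<pi> =
     (\<Sum>\<sigma>\<in>{\<sigma>\<in>partitions (N - {i} - S). rem j \<sigma> = \<pi>}. ewens (N - {i} - S) \<sigma> * r_star N w i S \<sigma>)"
    using cond_star[of "N - {i}" j S \<pi> "r_star N w i"] assms e by auto
  also have "\<dots> = (\<Sum>\<sigma>\<in>{\<sigma>\<in>partitions (N - {i} - S). rem j \<sigma> = \<pi>}. \<Sum>\<rho>\<in>{\<rho>\<in>partitions (N - S). rem i \<rho> = \<sigma>}. ?f \<rho>)"
    using assms by (intro sum.cong[OF refl] cond_star) (auto simp: partitions_def)
  also have "\<dots> = (\<Sum>\<sigma>\<in>{\<sigma>\<in>partitions (N - {i} - S). rem j \<sigma> = \<pi>}.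
       \<Sum>\<rho>\<in>{\<rho>. \<rho> \<in> {\<rho>\<in>partitions (N - S). rem j (rem i \<rho>) = \<pi>} \<and> rem i \<rho> = \<sigma>}. ?f \<rho>)"
    by (intro sum.cong[OF refl] arg_cong2[where f=sum]) auto
  also have "\<dots> = (\<Sum>\<rho>\<in>{\<rho>\<in>partitions (N - S). rem j (rem i \<rho>) = \<pi>}. ?f \<rho>)"
  proof (rule sum.group)
    show "finite {\<rho>\<in>partitions (N - S). rem j (rem i \<rho>) = \<pi>}" using assms(1) by (simp add: finite_partitions)
    show "finite {\<sigma>\<in>partitions (N - {i} - S). rem j \<sigma> = \<pi>}" using assms(1) by (simp add: finite_partitions)
    have ins: "N - S = insert i (N - {i} - S)" using assms by auto
    show "rem i ` {\<rho>\<in>partitions (N - S). rem j (rem i \<rho>) = \<pi>} \<subseteq> {\<sigma>\<in>partitions (N - {i} - S). rem j \<sigma> = \<pi>}"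
      using rem_part[of i "N - {i} - S"] unfolding ins by (auto simp: partitions_def)
  qed
  finally show ?thesis .
qed

lemma pi_star:
  assumes "finite U"
  shows "path_independent U r_star"
  unfolding path_independent_def
proof (intro allI impI)
  fix N w i j S \<pi> assume a: "N \<subseteq> U" "tux_game N w" "i \<in> N" "j \<in> N" "i \<noteq> j" "embedded (N - {i, j}) S \<pi>"
  have fN: "finite N" using a(1) assms finite_subset by blast
  have S: "S \<subseteq> N - {i, j}" "partition_on (N - {i, j} - S) \<pi>" using a(6) unfolding embedded_def by auto
  have S': "S \<subseteq> N - {j, i}" "partition_on (N - {j, i} - S) \<pi>" using S by (auto simp: insert_commute)
  have pos: "ewens (N - {i, j} - S) \<pi> > 0" using ewens_pos[of "N - {i, j} - S" \<pi>] S fN by auto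
  have "ewens (N - {i, j} - S) \<pi> * r_star (N - {i}) (r_star N w i) j S \<pi> =
        ewens (N - {i, j} - S) \<pi> * r_star (N - {j}) (r_star N w j) i S \<pi>"
    using double_star[OF fN a(3,4,5) S] double_star[OF fN a(4,3) a(5)[symmetric] S']
    by (simp add: rem_comm insert_commute)
  then show "r_star (N - {i}) (r_star N w i) j S \<pi> = r_star (N - {j}) (r_star N w j) i S \<pi>"
    using pos by simp
qed

lemma ro_tux: "restriction_operator U r \<Longrightarrow> N \<subseteq> U \<Longrightarrow> tux_game N w \<Longrightarrow> i \<in> N \<Longrightarrow> tux_game (N - {i}) (r N w i)"
  unfolding restriction_operator_def by blast

lemma ro_loc: "restriction_operator U r \<Longrightarrow> N \<subseteq> U \<Longrightarrow> tux_game N w \<Longrightarrow> i \<in> N \<Longrightarrow> tux_game N w' \<Longrightarrow>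
  embedded (N - {i}) S \<pi> \<Longrightarrow> (\<forall>B\<in>insert {} \<pi>. w S (add_to i \<pi> B) = w' S (add_to i \<pi> B)) \<Longrightarrow>
  r N w i S \<pi> = r N w' i S \<pi>"
  unfolding restriction_operator_def by blast

lemma rl_tux:
  assumes R: "restriction_operator U r"
  shows "N \<subseteq> U \<Longrightarrow> tux_game N w \<Longrightarrow> distinct xs \<Longrightarrow> set xs \<subseteq> N \<Longrightarrow>
    tux_game (N - set xs) (restr_list r N w xs)"
proof (induction xs arbitrary: N w)
  case Nil then show ?case by simp
next
  case (Cons x xs)
  have "tux_game (N - {x}) (r N w x)" using R Cons.prems unfolding restriction_operator_def by auto
  then have "tux_game (N - {x} - set xs) (restr_list r (N - {x}) (r N w x) xs)"
    using Cons.IH[of "N - {x}" "r N w x"] Cons.prems by auto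
  then show ?case by (simp add: Diff_insert2[symmetric] insert_commute)
qed

lemma rl_slice:
  assumes R: "restriction_operator U r"
  shows "N \<subseteq> U \<Longrightarrow> tux_game N w \<Longrightarrow> tux_game N w' \<Longrightarrow> distinct xs \<Longrightarrow> set xs \<subseteq> N \<Longrightarrow>
    T \<subseteq> N - set xs \<Longrightarrow> (\<forall>\<rho>. partition_on (N - T) \<rho> \<longrightarrow> w T \<rho> = w' T \<rho>) \<Longrightarrow>
    partition_on (N - set xs - T) \<pi> \<Longrightarrow> restr_list r N w xs T \<pi> = restr_list r N w' xs T \<pi>"
proof (induction xs arbitrary: N w w' \<pi>)
  case Nil then show ?case by simp
next
  case (Cons x xs)
  have x: "x \<in> N" "x \<notin> T" using Cons.prems by auto
  have t: "tux_game (N - {x}) (r N w x)" "tux_game (N - {x}) (r N w' x)"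
    using R Cons.prems x unfolding restriction_operator_def by auto
  have ag: "\<forall>\<rho>. partition_on (N - {x} - T) \<rho> \<longrightarrow> r N w x T \<rho> = r N w' x T \<rho>"
  proof (intro allI impI)
    fix \<rho> assume \<rho>: "partition_on (N - {x} - T) \<rho>"
    have emb: "embedded (N - {x}) T \<rho>" unfolding embedded_def using \<rho> Cons.prems by auto
    have ins: "insert x (N - {x} - T) = N - T" using x by auto
    have "\<forall>B\<in>insert {} \<rho>. w T (add_to x \<rho> B) = w' T (add_to x \<rho> B)"
      using Cons.prems(7) add_to_part[OF \<rho>, of x] ins by auto
    then show "r N w x T \<rho> = r N w' x T \<rho>"
      using R Cons.prems(1,2,3) x(1) emb unfolding restriction_operator_def by blast
  qed
  have p: "N - {x} \<subseteq> U" "distinct xs" "set xs \<subseteq> N - {x}" "T \<subseteq> N - {x} - set xs"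
    "partition_on (N - {x} - set xs - T) \<pi>" using Cons.prems by (auto simp: Diff_insert2[symmetric] insert_commute)
  have "restr_list r (N - {x}) (r N w x) xs T \<pi> = restr_list r (N - {x}) (r N w' x) xs T \<pi>"
    by (rule Cons.IH[OF p(1) t p(2,3,4) ag p(5)])
  then show ?case by simp
qed

lemma rl_zero:
  assumes R: "restriction_operator U r" and PN: "preserves_null U r"
  shows "N \<subseteq> U \<Longrightarrow> tux_game N w \<Longrightarrow> distinct xs \<Longrightarrow> set xs \<subseteq> N \<Longrightarrow>
    T \<subseteq> N - set xs \<Longrightarrow> (\<forall>\<rho>. partition_on (N - T) \<rho> \<longrightarrow> w T \<rho> = 0) \<Longrightarrow>
    partition_on (N - set xs - T) \<pi> \<Longrightarrow> restr_list r N w xs T \<pi> = 0"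
proof (induction xs arbitrary: N w \<pi>)
  case Nil then show ?case by simp
next
  case (Cons x xs)
  have x: "x \<in> N" "x \<notin> T" using Cons.prems by auto
  have t: "tux_game (N - {x}) (r N w x)"
    using R Cons.prems x unfolding restriction_operator_def by auto
  have z0: "tux_game N (\<lambda>S \<pi>. 0)" unfolding tux_game_def by simp
  have ag: "\<forall>\<rho>. partition_on (N - {x} - T) \<rho> \<longrightarrow> r N w x T \<rho> = 0"
  proof (intro allI impI)
    fix \<rho> assume \<rho>: "partition_on (N - {x} - T) \<rho>"
    have emb: "embedded (N - {x}) T \<rho>" unfolding embedded_def using \<rho> Cons.prems by auto
    have ins: "insert x (N - {x} - T) = N - T" using x by auto
    have "\<forall>B\<in>insert {} \<rho>. w T (add_to x \<rho> B) = (\<lambda>S \<pi>. 0) T (add_to x \<rho> B)"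
      using Cons.prems(6) add_to_part[OF \<rho>, of x] ins by auto
    then have "r N w x T \<rho> = r N (\<lambda>S \<pi>. 0) x T \<rho>"
      using R Cons.prems(1,2) z0 x(1) emb unfolding restriction_operator_def by blast
    also have "\<dots> = 0" using PN Cons.prems(1) x(1) emb unfolding preserves_null_def by blast
    finally show "r N w x T \<rho> = 0" .
  qed
  have p: "N - {x} \<subseteq> U" "distinct xs" "set xs \<subseteq> N - {x}" "T \<subseteq> N - {x} - set xs"
    "partition_on (N - {x} - set xs - T) \<pi>" using Cons.prems by (auto simp: Diff_insert2[symmetric] insert_commute)
  have "restr_list r (N - {x}) (r N w x) xs T \<pi> = 0"
    by (rule Cons.IH[OF p(1) t p(2,3,4) ag p(5)])
  then show ?case by simp
qed

lemma aux_list: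
  assumes "finite N" "T \<subseteq> N"
  shows "\<exists>xs. distinct xs \<and> set xs = N - T \<and> (\<forall>r w. aux_game r N w T = restr_list r N w xs T {})"
proof -
  have "\<exists>xs. distinct xs \<and> set xs = N - T" using finite_distinct_list[of "N - T"] assms by auto
  then have "distinct (SOME xs. distinct xs \<and> set xs = N - T) \<and> set (SOME xs. distinct xs \<and> set xs = N - T) = N - T"
    by (rule someI_ex)
  then show ?thesis unfolding aux_game_def restr_set_def by blast
qed

lemma aux_slice:
  assumes R: "restriction_operator U r" and "finite N" "N \<subseteq> U" "tux_game N w" "tux_game N w'" "T \<subseteq> N"
    "\<forall>\<rho>. partition_on (N - T) \<rho> \<longrightarrow> w T \<rho> = w' T \<rho>"
  shows "aux_game r N w T = aux_game r N w' T"
proof -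
  obtain xs where xs: "distinct xs" "set xs = N - T" "\<And>r w. aux_game r N w T = restr_list r N w xs T {}"
    using aux_list[OF assms(2,6)] by blast
  have e: "N - set xs - T = {}" using xs(2) by auto
  have a12: "set xs \<subseteq> N" "T \<subseteq> N - set xs" using xs(2) assms(6) by auto
  have a3: "partition_on (N - set xs - T) {}" by (subst e, simp add: partition_on_empty)
  note a = a12 a3
  show ?thesis unfolding xs(3)
    by (rule rl_slice[OF R assms(3,4,5) xs(1) a(1,2) assms(7) a(3)])
qed

lemma aux_zero:
  assumes R: "restriction_operator U r" and PN: "preserves_null U r"
    and "finite N" "N \<subseteq> U" "tux_game N w" "T \<subseteq> N" "\<forall>\<rho>. partition_on (N - T) \<rho> \<longrightarrow> w T \<rho> = 0"
  shows "aux_game r N w T = 0"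
proof -
  obtain xs where xs: "distinct xs" "set xs = N - T" "\<And>r w. aux_game r N w T = restr_list r N w xs T {}"
    using aux_list[OF assms(3,6)] by blast
  have e: "N - set xs - T = {}" using xs(2) by auto
  have a12: "set xs \<subseteq> N" "T \<subseteq> N - set xs" using xs(2) assms(6) by auto
  have a3: "partition_on (N - set xs - T) {}" by (subst e, simp add: partition_on_empty)
  note a = a12 a3
  show ?thesis unfolding xs(3)
    by (rule rl_zero[OF R PN assms(4,5) xs(1) a(1,2) assms(7) a(3)])
qed

lemma rl_swap:
  assumes R: "restriction_operator U r" and PI: "path_independent U r"
    and "N \<subseteq> U" "tux_game N w" "a \<noteq> b" "a \<in> N" "b \<in> N" "distinct zs" "a \<notin> set zs" "b \<notin> set zs"
    "set zs \<subseteq> N" "T \<subseteq> N - insert a (insert b (set zs))"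
    "partition_on (N - insert a (insert b (set zs)) - T) \<pi>"
  shows "restr_list r N w (a # b # zs) T \<pi> = restr_list r N w (b # a # zs) T \<pi>"
proof -
  let ?M = "N - {a} - {b}"
  have M: "N - {b} - {a} = ?M" by auto
  have t1: "tux_game (N - {a}) (r N w a)" "tux_game (N - {b}) (r N w b)"
    using ro_tux[OF R assms(3,4)] assms(6,7) by auto
  have s: "N - {a} \<subseteq> U" "N - {b} \<subseteq> U" "b \<in> N - {a}" "a \<in> N - {b}" using assms(3,5,6,7) by auto
  have t2: "tux_game ?M (r (N - {a}) (r N w a) b)" "tux_game ?M (r (N - {b}) (r N w b) a)"
    using ro_tux[OF R s(1) t1(1) s(3)] ro_tux[OF R s(2) t1(2) s(4)] by (auto simp: M)
  have ag: "\<forall>\<rho>. partition_on (?M - T) \<rho> \<longrightarrow> r (N - {a}) (r N w a) b T \<rho> = r (N - {b}) (r N w b) a T \<rho>"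
  proof (intro allI impI)
    fix \<rho> assume "partition_on (?M - T) \<rho>"
    then have "embedded (N - {a, b}) T \<rho>" unfolding embedded_def using assms(12)
      by (auto simp: Diff_insert2[symmetric] insert_commute)
    then show "r (N - {a}) (r N w a) b T \<rho> = r (N - {b}) (r N w b) a T \<rho>"
      using PI assms(3-7) unfolding path_independent_def by blast
  qed
  have eqs: "?M - set zs - T = N - insert a (insert b (set zs)) - T" by auto
  have p: "?M \<subseteq> U" "set zs \<subseteq> ?M" "T \<subseteq> ?M - set zs" "partition_on (?M - set zs - T) \<pi>"
    using assms(3,9,10,11,12) apply auto[3] unfolding eqs by (rule assms(13))
  have "restr_list r ?M (r (N - {a}) (r N w a) b) zs T \<pi> = restr_list r ?M (r (N - {b}) (r N w b) a) zs T \<pi>"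
    by (rule rl_slice[OF R p(1) t2 assms(8) p(2,3) ag p(4)])
  then show ?thesis by (simp add: M)
qed

lemma rl_move:
  assumes R: "restriction_operator U r" and PI: "path_independent U r"
  shows "N \<subseteq> U \<Longrightarrow> tux_game N w \<Longrightarrow> distinct (ys1 @ x # ys2) \<Longrightarrow> set (ys1 @ x # ys2) \<subseteq> N \<Longrightarrow>
    T \<subseteq> N - set (ys1 @ x # ys2) \<Longrightarrow> partition_on (N - set (ys1 @ x # ys2) - T) \<pi> \<Longrightarrow>
    restr_list r N w (ys1 @ x # ys2) T \<pi> = restr_list r N w (x # ys1 @ ys2) T \<pi>"
proof (induction ys1 arbitrary: N w)
  case Nil then show ?case by simp
next
  case (Cons y ys1)
  have y: "y \<in> N" using Cons.prems by auto
  have t: "tux_game (N - {y}) (r N w y)" using R Cons.prems y unfolding restriction_operator_def by auto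
  have p: "N - {y} \<subseteq> U" "distinct (ys1 @ x # ys2)" "set (ys1 @ x # ys2) \<subseteq> N - {y}"
    "T \<subseteq> N - {y} - set (ys1 @ x # ys2)" "partition_on (N - {y} - set (ys1 @ x # ys2) - T) \<pi>"
    using Cons.prems by (auto simp: Diff_insert2[symmetric] insert_commute)
  have "restr_list r N w ((y # ys1) @ x # ys2) T \<pi> = restr_list r (N - {y}) (r N w y) (ys1 @ x # ys2) T \<pi>"
    by simp
  also have "\<dots> = restr_list r (N - {y}) (r N w y) (x # ys1 @ ys2) T \<pi>"
    by (rule Cons.IH[OF p(1) t p(2,3,4,5)])
  also have "\<dots> = restr_list r N w (y # x # ys1 @ ys2) T \<pi>" by simp
  also have "\<dots> = restr_list r N w (x # y # ys1 @ ys2) T \<pi>"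
    using rl_swap[OF R PI Cons.prems(1,2), of y x "ys1 @ ys2" T \<pi>] Cons.prems
    by (auto simp: insert_commute)
  finally show ?case by simp
qed

lemma rl_perm:
  assumes R: "restriction_operator U r" and PI: "path_independent U r"
  shows "distinct xs \<Longrightarrow> distinct ys \<Longrightarrow> set ys = set xs \<Longrightarrow> N \<subseteq> U \<Longrightarrow> tux_game N w \<Longrightarrow> set xs \<subseteq> N \<Longrightarrow>
    T \<subseteq> N - set xs \<Longrightarrow> partition_on (N - set xs - T) \<pi> \<Longrightarrow>
    restr_list r N w xs T \<pi> = restr_list r N w ys T \<pi>"
proof (induction xs arbitrary: ys N w)
  case Nil then show ?case by simp
next
  case (Cons x xs)
  have "x \<in> set ys" using Cons.prems by auto
  then obtain ys1 ys2 where ys: "ys = ys1 @ x # ys2" by (meson split_list)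
  have x: "x \<in> N" using Cons.prems by auto
  have t: "tux_game (N - {x}) (r N w x)" using R Cons.prems x unfolding restriction_operator_def by auto
  have "restr_list r N w ys T \<pi> = restr_list r N w (x # ys1 @ ys2) T \<pi>"
  proof -
    have sy: "set (ys1 @ x # ys2) = set (x # xs)" using Cons.prems(3) ys by simp
    have q: "distinct (ys1 @ x # ys2)" "set (ys1 @ x # ys2) \<subseteq> N" "T \<subseteq> N - set (ys1 @ x # ys2)"
      "partition_on (N - set (ys1 @ x # ys2) - T) \<pi>"
      using Cons.prems(2,6,7,8) ys unfolding sy by auto
    show ?thesis unfolding ys by (rule rl_move[OF R PI Cons.prems(4,5) q])
  qed
  also have "\<dots> = restr_list r (N - {x}) (r N w x) (ys1 @ ys2) T \<pi>" by simp
  also have "\<dots> = restr_list r (N - {x}) (r N w x) xs T \<pi>"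
  proof -
    have p: "distinct xs" "distinct (ys1 @ ys2)" "set (ys1 @ ys2) = set xs" "N - {x} \<subseteq> U"
      "set xs \<subseteq> N - {x}" "T \<subseteq> N - {x} - set xs" "partition_on (N - {x} - set xs - T) \<pi>"
      using Cons.prems ys by (auto simp: Diff_insert2[symmetric] insert_commute)
    show ?thesis using Cons.IH[OF p(1,2,3,4) t p(5,6,7)] by simp
  qed
  also have "\<dots> = restr_list r N w (x # xs) T \<pi>" by simp
  finally show ?case by simp
qed

lemma aux_path:
  assumes R: "restriction_operator U r" and PI: "path_independent U r"
    and "finite N" "N \<subseteq> U" "tux_game N w" "i \<in> N" "S \<subseteq> N - {i}"
  shows "aux_game r (N - {i}) (r N w i) S = aux_game r N w S"
proof -
  have S: "S \<subseteq> N" using assms(7) by auto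
  obtain xs where xs: "distinct xs" "set xs = N - S" "\<And>r w. aux_game r N w S = restr_list r N w xs S {}"
    using aux_list[OF assms(3) S] by blast
  obtain ys where ys: "distinct ys" "set ys = N - {i} - S" "\<And>r w. aux_game r (N - {i}) w S = restr_list r (N - {i}) w ys S {}"
    using aux_list[of "N - {i}" S] assms(3,7) by auto
  have e: "N - set xs - S = {}" using xs(2) by auto
  have a: "distinct (i # ys)" "set (i # ys) = set xs" "set xs \<subseteq> N" "S \<subseteq> N - set xs"
    using xs(2) ys(1,2) assms(6,7) by auto
  have a5: "partition_on (N - set xs - S) {}" by (subst e, simp add: partition_on_empty)
  have "aux_game r (N - {i}) (r N w i) S = restr_list r N w (i # ys) S {}" unfolding ys(3) by simp
  also have "\<dots> = restr_list r N w xs S {}"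
    using rl_perm[OF R PI xs(1) a(1,2) assms(4,5) a(3,4) a5] by simp
  finally show ?thesis unfolding xs(3) .
qed

lemma rep:
  assumes U: "finite U" and R: "restriction_operator U r" and PN: "preserves_null U r"
    and POT: "\<forall>N w. N \<subseteq> U \<longrightarrow> tux_game N w \<longrightarrow> pot_r r N w = expect p N w"
    and N: "N \<subseteq> U" and w: "tux_game N w" and T: "T \<subseteq> N" "T \<noteq> {}"
  shows "fact (card T - 1) * fact (card N - card T) / fact (card N) * aux_game r N w T =
         (\<Sum>\<tau>\<in>partitions (N - T). p N (insert T \<tau>) * w T \<tau>)"
proof -
  have fN: "finite N" using N U finite_subset by blast
  define w0 where "w0 = (\<lambda>S \<pi>. if S = T then w S \<pi> else 0)"
  have t0: "tux_game N w0" unfolding tux_game_def w0_def using T(2) by simp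
  have z: "aux_game r N w0 S = 0" if "S \<subseteq> N" "S \<noteq> T" for S
    using aux_zero[OF R PN fN N t0 that(1)] that(2) unfolding w0_def by simp
  have a: "aux_game r N w0 T = aux_game r N w T"
    using aux_slice[OF R fN N t0 w T(1)] unfolding w0_def by simp
  let ?c = "\<lambda>S. fact (card S - 1) * fact (card N - card S) / fact (card N) :: real"
  have TS: "T \<in> {S. S \<subseteq> N \<and> S \<noteq> {}}" using T by auto
  have finS: "finite {S. S \<subseteq> N \<and> S \<noteq> {}}" using fN by auto
  have "pot_r r N w0 = (\<Sum>S\<in>{S. S \<subseteq> N \<and> S \<noteq> {}}. ?c S * aux_game r N w0 S)"
    unfolding pot_r_def pot_def by simp
  also have "\<dots> = (\<Sum>S\<in>{S. S \<subseteq> N \<and> S \<noteq> {}}. if S = T then ?c T * aux_game r N w0 T else 0)"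
    using z by (intro sum.cong[OF refl]) auto
  also have "\<dots> = ?c T * aux_game r N w T" using TS finS a by (simp add: sum.delta)
  finally have l: "pot_r r N w0 = ?c T * aux_game r N w T" .
  have "expect p N w0 = (\<Sum>\<pi>\<in>partitions N. \<Sum>S\<in>\<pi>. p N (insert S (\<pi> - {S})) * w0 S (\<pi> - {S}))"
    unfolding expect_def sum_distrib_left
    by (intro sum.cong[OF refl]) (simp add: insert_absorb)
  also have "\<dots> = (\<Sum>S\<in>{S. S \<subseteq> N \<and> S \<noteq> {}}. \<Sum>\<tau>\<in>partitions (N - S). p N (insert S \<tau>) * w0 S \<tau>)"
    by (rule blocks_bij[OF fN])
  also have "\<dots> = (\<Sum>S\<in>{S. S \<subseteq> N \<and> S \<noteq> {}}. if S = T then (\<Sum>\<tau>\<in>partitions (N - T). p N (insert T \<tau>) * w T \<tau>) else 0)"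
    unfolding w0_def by (intro sum.cong[OF refl]) auto
  also have "\<dots> = (\<Sum>\<tau>\<in>partitions (N - T). p N (insert T \<tau>) * w T \<tau>)" using TS finS by (simp add: sum.delta)
  finally have r: "expect p N w0 = (\<Sum>\<tau>\<in>partitions (N - T). p N (insert T \<tau>) * w T \<tau>)" .
  show ?thesis using POT N t0 l r by simp
qed

lemma mono_null:
  assumes U: "finite U" and R: "restriction_operator U r" and PN: "preserves_null U r"
    and M: "monotonic U (shapley_r r)"
  shows "null_player_property U (shapley_r r)"
  unfolding null_player_property_def
proof (intro allI impI)
  fix N w i assume a: "N \<subseteq> U" "tux_game N w" "i \<in> N" "null_player N w i"
  have fN: "finite N" using a(1) U finite_subset by blast
  have t0: "tux_game N (\<lambda>S \<pi>. 0)" unfolding tux_game_def by simp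
  have z: "shapley_r r N (\<lambda>S \<pi>. 0) i = 0" unfolding shapley_r_def shapley_def
  proof (intro sum.neutral ballI)
    fix S assume "S \<in> {S. S \<subseteq> N - {i}}"
    then have "S \<subseteq> N" "insert i S \<subseteq> N" using a(3) by auto
    then show "fact (card S) * fact (card N - card S - 1) / fact (card N) *
      (aux_game r N (\<lambda>S \<pi>. 0) (insert i S) - aux_game r N (\<lambda>S \<pi>. 0) S) = 0"
      using aux_zero[OF R PN fN a(1) t0] by simp
  qed
  have c: "\<forall>S \<pi>. embedded (N - {i}) S \<pi> \<longrightarrow> (\<forall>B\<in>insert {} \<pi>. w (insert i S) \<pi> - w S (add_to i \<pi> B) = 0)"
  proof (intro allI impI ballI)
    fix S \<pi> B assume "embedded (N - {i}) S \<pi>" "B \<in> insert {} \<pi>"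
    then have "w (insert i S) \<pi> = w S (add_to i \<pi> B)" using a(4) unfolding null_player_def by blast
    then show "w (insert i S) \<pi> - w S (add_to i \<pi> B) = 0" by simp
  qed
  have "shapley_r r N w i \<ge> shapley_r r N (\<lambda>S \<pi>. 0) i"
    using M a(1,2,3) t0 c unfolding monotonic_def by (metis (no_types, lifting) order_refl diff_self)
  moreover have "shapley_r r N (\<lambda>S \<pi>. 0) i \<ge> shapley_r r N w i"
    using M a(1,2,3) t0 c unfolding monotonic_def by (metis (no_types, lifting) order_refl diff_self)
  ultimately show "shapley_r r N w i = 0" using z by simp
qed

lemma null_rel:
  assumes U: "finite U" and R: "restriction_operator U r" and PN: "preserves_null U r"
    and POT: "\<forall>N w. N \<subseteq> U \<longrightarrow> tux_game N w \<longrightarrow> pot_r r N w = expect p N w"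
    and NP: "null_player_property U (shapley_r r)"
    and N: "N \<subseteq> U" and i: "i \<in> N" and S0: "S0 \<subseteq> N - {i}" "S0 \<noteq> {}"
    and t0: "partition_on (N - {i} - S0) \<tau>0"
  shows "p N (insert (insert i S0) \<tau>0) / (fact (card S0) * fact (card N - card S0 - 1)) =
         (\<Sum>B\<in>insert {} \<tau>0. p N (insert S0 (add_to i \<tau>0 B))) / (fact (card S0 - 1) * fact (card N - card S0))"
proof -
  have fN: "finite N" using N U finite_subset by blast
  have iS0: "i \<notin> S0" using S0 by auto
  define w where "w = (\<lambda>S \<pi>. if S = insert i S0 \<and> \<pi> = \<tau>0 then 1 else if S = S0 \<and> rem i \<pi> = \<tau>0 then 1 else (0::real))"
  have tw: "tux_game N w" unfolding tux_game_def w_def using S0(2) by auto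
  have nul: "null_player N w i" unfolding null_player_def
  proof (intro allI impI ballI)
    fix S \<pi> B assume e: "embedded (N - {i}) S \<pi>" and B: "B \<in> insert {} \<pi>"
    have Si: "i \<notin> S" "S \<subseteq> N - {i}" and p: "partition_on (N - {i} - S) \<pi>" using e unfolding embedded_def by auto
    have ra: "rem i (add_to i \<pi> B) = \<pi>" by (rule rem_add_to[OF p _ B]) simp
    have e1: "(insert i S = insert i S0) = (S = S0)" using Si(1) iS0 by (metis insert_ident)
    have e2: "insert i S \<noteq> S0" using iS0 by auto
    have e3: "S \<noteq> insert i S0" using Si(1) by auto
    show "w (insert i S) \<pi> = w S (add_to i \<pi> B)" unfolding w_def using e1 e2 e3 ra by simp
  qed
  have sh0: "shapley_r r N w i = 0" using NP N tw i nul unfolding null_player_property_def by blast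
  let ?v = "aux_game r N w"
  have z: "?v S = 0" if "S \<subseteq> N" "S \<noteq> S0" "S \<noteq> insert i S0" for S
    using aux_zero[OF R PN fN N tw that(1)] that(2,3) unfolding w_def by simp
  let ?k = "\<lambda>S. fact (card S) * fact (card N - card S - 1) / fact (card N) :: real"
  have S0m: "S0 \<in> {S. S \<subseteq> N - {i}}" using S0 by auto
  have "shapley_r r N w i = (\<Sum>S\<in>{S. S \<subseteq> N - {i}}. if S = S0 then ?k S0 * (?v (insert i S0) - ?v S0) else 0)"
    unfolding shapley_r_def shapley_def
  proof (intro sum.cong[OF refl])
    fix S assume "S \<in> {S. S \<subseteq> N - {i}}"
    then have S: "S \<subseteq> N - {i}" by auto
    show "?k S * (?v (insert i S) - ?v S) = (if S = S0 then ?k S0 * (?v (insert i S0) - ?v S0) else 0)"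
    proof (cases "S = S0")
      case False
      have iS: "i \<notin> S" using S by auto
      have h: "insert i S \<subseteq> N" "insert i S \<noteq> S0" "insert i S \<noteq> insert i S0"
        using S i iS0 insert_ident[OF iS iS0] False by auto
      have "?v (insert i S) = 0" by (rule z[OF h])
      moreover have "?v S = 0" using S False by (intro z) auto
      ultimately show ?thesis using False by simp
    qed simp
  qed
  also have "\<dots> = ?k S0 * (?v (insert i S0) - ?v S0)" using S0m fN by (simp add: sum.delta)
  finally have "?k S0 * (?v (insert i S0) - ?v S0) = 0" using sh0 by simp
  then have veq: "?v (insert i S0) = ?v S0" by simp
  let ?A = "N - {i} - S0"
  have finA: "finite ?A" using fN by auto
  have iA: "i \<notin> ?A" by auto
  have e1: "N - insert i S0 = ?A" by auto
  have e2: "N - S0 = insert i ?A" using i S0 by auto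
  have cI: "card (insert i S0) = card S0 + 1" using iS0 fN S0 by (simp add: finite_subset)
  have r1: "fact (card (insert i S0) - 1) * fact (card N - card (insert i S0)) / fact (card N) * ?v (insert i S0)
      = p N (insert (insert i S0) \<tau>0)"
  proof -
    have "fact (card (insert i S0) - 1) * fact (card N - card (insert i S0)) / fact (card N) * ?v (insert i S0)
      = (\<Sum>\<tau>\<in>partitions ?A. p N (insert (insert i S0) \<tau>) * w (insert i S0) \<tau>)"
      using rep[OF U R PN POT N tw, of "insert i S0"] S0 i e1 by auto
    also have "\<dots> = (\<Sum>\<tau>\<in>partitions ?A. if \<tau> = \<tau>0 then p N (insert (insert i S0) \<tau>0) else 0)"
      unfolding w_def using iS0 by (intro sum.cong[OF refl]) auto
    also have "\<dots> = p N (insert (insert i S0) \<tau>0)"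
    proof -
      have "\<tau>0 \<in> partitions ?A" using t0 by (simp add: partitions_def)
      then show ?thesis by (simp add: finite_partitions[OF finA])
    qed
    finally show ?thesis .
  qed
  have r0: "fact (card S0 - 1) * fact (card N - card S0) / fact (card N) * ?v S0
      = (\<Sum>B\<in>insert {} \<tau>0. p N (insert S0 (add_to i \<tau>0 B)))"
  proof -
    have "fact (card S0 - 1) * fact (card N - card S0) / fact (card N) * ?v S0
      = (\<Sum>\<rho>\<in>partitions (insert i ?A). p N (insert S0 \<rho>) * w S0 \<rho>)"
      using rep[OF U R PN POT N tw, of S0] S0 e2 by auto
    also have "\<dots> = (\<Sum>\<pi>\<in>partitions ?A. \<Sum>B\<in>insert {} \<pi>. p N (insert S0 (add_to i \<pi> B)) * w S0 (add_to i \<pi> B))"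
      by (rule decomp[OF finA iA])
    also have "\<dots> = (\<Sum>\<pi>\<in>partitions ?A. if \<pi> = \<tau>0 then (\<Sum>B\<in>insert {} \<tau>0. p N (insert S0 (add_to i \<tau>0 B))) else 0)"
    proof (intro sum.cong[OF refl])
      fix \<pi> assume "\<pi> \<in> partitions ?A"
      then have pp: "partition_on ?A \<pi>" by (simp add: partitions_def)
      have ws: "\<And>B. B \<in> insert {} \<pi> \<Longrightarrow> w S0 (add_to i \<pi> B) = (if \<pi> = \<tau>0 then 1 else 0)"
        unfolding w_def using rem_add_to[OF pp iA] iS0 by auto
      show "(\<Sum>B\<in>insert {} \<pi>. p N (insert S0 (add_to i \<pi> B)) * w S0 (add_to i \<pi> B)) =
        (if \<pi> = \<tau>0 then (\<Sum>B\<in>insert {} \<tau>0. p N (insert S0 (add_to i \<tau>0 B))) else 0)"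
      proof (cases "\<pi> = \<tau>0")
        case True
        then show ?thesis using ws by (auto intro!: sum.cong)
      next
        case False
        then show ?thesis using ws by (auto intro!: sum.neutral)
      qed
    qed
    also have "\<dots> = (\<Sum>B\<in>insert {} \<tau>0. p N (insert S0 (add_to i \<tau>0 B)))"
    proof -
      have "\<tau>0 \<in> partitions ?A" using t0 by (simp add: partitions_def)
      then show ?thesis by (simp add: finite_partitions[OF finA])
    qed
    finally show ?thesis .
  qed
  have "S0 \<subset> N" using S0 i by auto
  then have "card S0 < card N" using psubset_card_mono[OF fN] by blast
  then have f1: "card (insert i S0) - 1 = card S0" "card N - card (insert i S0) = card N - card S0 - 1"
    using cI by auto
  have q1: "p N (insert (insert i S0) \<tau>0) / (fact (card S0) * fact (card N - card S0 - 1)) = ?v S0 / fact (card N)"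
    using r1 veq unfolding f1 by (simp add: field_simps)
  have q0: "(\<Sum>B\<in>insert {} \<tau>0. p N (insert S0 (add_to i \<tau>0 B))) / (fact (card S0 - 1) * fact (card N - card S0)) = ?v S0 / fact (card N)"
    using r0 by (simp add: field_simps)
  show ?thesis using q1 q0 by simp
qed

lemma crp0:
  assumes U: "finite U" and R: "restriction_operator U r" and PN: "preserves_null U r"
    and POT: "\<forall>N w. N \<subseteq> U \<longrightarrow> tux_game N w \<longrightarrow> pot_r r N w = expect p N w"
    and NP: "null_player_property U (shapley_r r)"
    and N: "N \<subseteq> U" and i: "i \<in> N" and \<sigma>: "partition_on (N - {i}) \<sigma>" and X: "X \<in> \<sigma>"
  shows "real (card N) * p N (add_to i \<sigma> X) = real (card X) * (\<Sum>B\<in>insert {} \<sigma>. p N (add_to i \<sigma> B))"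
proof -
  have fN: "finite N" using N U finite_subset by blast
  have Xs: "X \<subseteq> N - {i}" "X \<noteq> {}" using \<sigma> X unfolding pon_iff by auto
  have t0: "partition_on (N - {i} - X) (\<sigma> - {X})" using \<sigma> X unfolding pon_iff by blast
  have fs: "finite \<sigma>" using \<sigma> fN finite_elements by blast
  have id1: "insert (insert i X) (\<sigma> - {X}) = add_to i \<sigma> X" unfolding add_to_def using Xs by simp
  have id2: "insert X (add_to i (\<sigma> - {X}) B) = add_to i \<sigma> B" if "B \<in> insert {} (\<sigma> - {X})" for B
  proof (cases "B = {}")
    case True then show ?thesis unfolding add_to_def using X by (auto simp: insert_commute insert_absorb)
  next
    case False
    then have "B \<in> \<sigma>" "B \<noteq> X" using that by auto
    then show ?thesis unfolding add_to_def using X False by auto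
  qed
  let ?p = "\<lambda>B. p N (add_to i \<sigma> B)"
  let ?R = "\<Sum>B\<in>insert {} (\<sigma> - {X}). ?p B"
  have nr: "?p X / (fact (card X) * fact (card N - card X - 1)) = ?R / (fact (card X - 1) * fact (card N - card X))"
    using null_rel[OF U R PN POT NP N i Xs t0] id1 id2 by simp
  have tot: "(\<Sum>B\<in>insert {} \<sigma>. ?p B) = ?p X + ?R"
  proof -
    have "insert {} \<sigma> = insert X (insert {} (\<sigma> - {X}))" using X by auto
    moreover have "X \<notin> insert {} (\<sigma> - {X})" using Xs by auto
    ultimately show ?thesis using fs by simp
  qed
  have fX: "finite X" using Xs fN finite_subset by blast
  have x0: "card X > 0" using fX Xs by auto
  have "X \<subset> N" using Xs i by auto
  then have xn: "card X < card N" using psubset_card_mono[OF fN] by blast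
  have f1: "(fact (card X) :: real) = real (card X) * fact (card X - 1)" using fact_reduce[OF x0] by simp
  have nx: "card N - card X > 0" using xn by simp
  have f2: "(fact (card N - card X) :: real) = real (card N - card X) * fact (card N - card X - 1)"
    using fact_reduce[OF nx] by simp
  have rc: "real (card N - card X) = real (card N) - real (card X)" using xn by simp
  have "?p X * real (card N - card X) = ?R * real (card X)"
  proof -
    have nz: "real (card X) \<noteq> 0" "real (card N - card X) \<noteq> 0" using x0 nx by auto
    define D where "D = (fact (card X - 1) * fact (card N - card X - 1) :: real)"
    have Dp: "D \<noteq> 0" unfolding D_def by simp
    have nr': "?p X / (real (card X) * D) = ?R / (real (card N - card X) * D)"
      using nr unfolding f1 f2 D_def by (simp add: mult_ac)
    have "?p X * (real (card N - card X) * D) = ?R * (real (card X) * D)"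
      using nr' nz Dp by (simp add: frac_eq_eq)
    then have "(?p X * real (card N - card X)) * D = (?R * real (card X)) * D" by (simp add: mult_ac)
    then show ?thesis using Dp by simp
  qed
  then show ?thesis unfolding tot rc by (simp add: algebra_simps)
qed

lemma crp:
  assumes U: "finite U" and R: "restriction_operator U r" and PN: "preserves_null U r"
    and POT: "\<forall>N w. N \<subseteq> U \<longrightarrow> tux_game N w \<longrightarrow> pot_r r N w = expect p N w"
    and NP: "null_player_property U (shapley_r r)"
    and N: "N \<subseteq> U" and i: "i \<in> N" and \<sigma>: "partition_on (N - {i}) \<sigma>" and X: "X \<in> \<sigma>"
  shows "p N (add_to i \<sigma> X) = real (card X) * p N (add_to i \<sigma> {})"
proof -
  have fN: "finite N" using N U finite_subset by blast
  let ?p = "\<lambda>B. p N (add_to i \<sigma> B)"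
  let ?T = "\<Sum>B\<in>insert {} \<sigma>. ?p B"
  have c: "\<And>Y. Y \<in> \<sigma> \<Longrightarrow> real (card N) * ?p Y = real (card Y) * ?T"
    by (rule crp0[OF U R PN POT NP N i \<sigma>])
  have fs: "finite \<sigma>" using \<sigma> fN finite_elements by blast
  have ne: "{} \<notin> \<sigma>" using \<sigma> unfolding pon_iff by auto
  have n0: "card N > 0" using fN i card_gt_0_iff by blast
  have sc: "(\<Sum>Y\<in>\<sigma>. real (card Y)) = real (card N) - 1"
  proof -
    have "(\<Sum>Y\<in>\<sigma>. card Y) = card (N - {i})" using sum_card_part[OF \<sigma>] fN by simp
    then show ?thesis using i fN n0 by (simp flip: of_nat_sum add: of_nat_diff)
  qed
  have "real (card N) * ?T = real (card N) * ?p {} + (\<Sum>Y\<in>\<sigma>. real (card N) * ?p Y)"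
    using fs ne by (simp add: sum_distrib_left algebra_simps)
  also have "(\<Sum>Y\<in>\<sigma>. real (card N) * ?p Y) = (\<Sum>Y\<in>\<sigma>. real (card Y)) * ?T"
    using c by (simp add: sum_distrib_right)
  finally have "real (card N) * ?p {} = ?T" unfolding sc by (simp add: algebra_simps)
  then have "real (card N) * ?p X = real (card X) * (real (card N) * ?p {})" using c[OF X] by simp
  then show ?thesis using n0 by (simp add: algebra_simps)
qed

lemma adm_parts:
  assumes "finite U" "admissible_restriction U p r"
  shows "restriction_operator U r" "preserves_null U r" "path_independent U r"
    "\<forall>N w. N \<subseteq> U \<longrightarrow> tux_game N w \<longrightarrow> pot_r r N w = expect p N w"
    "null_player_property U (shapley_r r)"
  using assms mono_null unfolding admissible_restriction_def by blast+

lemma singl_part: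
  assumes "partition_on N \<pi>" "\<forall>i\<in>N. {i} \<in> \<pi>"
  shows "\<pi> = (\<lambda>x. {x}) ` N"
proof
  show "(\<lambda>x. {x}) ` N \<subseteq> \<pi>" using assms(2) by auto
  show "\<pi> \<subseteq> (\<lambda>x. {x}) ` N"
  proof
    fix X assume X: "X \<in> \<pi>"
    have u: "\<Union>\<pi> = N" and ne: "{} \<notin> \<pi>" and dj: "\<forall>X\<in>\<pi>. \<forall>Y\<in>\<pi>. X \<noteq> Y \<longrightarrow> X \<inter> Y = {}"
      using assms(1) unfolding pon_iff by auto
    have "X \<noteq> {}" using X ne by auto
    then obtain x where x: "x \<in> X" by auto
    have xN: "x \<in> N" using X x u by auto
    then have xs: "{x} \<in> \<pi>" using assms(2) by auto
    have "X = {x}"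
    proof (rule ccontr)
      assume "X \<noteq> {x}"
      then have "X \<inter> {x} = {}" using dj X xs by auto
      then show False using x by auto
    qed
    then show "X \<in> (\<lambda>x. {x}) ` N" using xN by auto
  qed
qed

lemma p_unique:
  assumes U: "finite U" and RP: "random_partition U p" and A: "admissible_restriction U p r"
    and N: "N \<subseteq> U" and \<pi>: "partition_on N \<pi>"
  shows "p N \<pi> = ewens N \<pi>"
proof -
  note ap = adm_parts[OF U A]
  have fN: "finite N" using N U finite_subset by blast
  define q where "q = (\<lambda>\<pi>. p N \<pi> / pf \<pi>)"
  have step: "q \<rho> = q (add_to i (rem i \<rho>) {})" if \<rho>: "partition_on N \<rho>" and i: "i \<in> N" for \<rho> i
  proof -
    have ins: "insert i (N - {i}) = N" using i by auto
    have \<rho>': "partition_on (insert i (N - {i})) \<rho>" using \<rho> ins by simp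
    have iA: "i \<notin> N - {i}" by simp
    define \<sigma> where "\<sigma> = rem i \<rho>"
    have \<sigma>: "partition_on (N - {i}) \<sigma>" unfolding \<sigma>_def by (rule rem_part[OF \<rho>' iA])
    obtain B where B: "B \<in> insert {} \<sigma>" "\<rho> = add_to i \<sigma> B"
      using add_to_rem[OF \<rho>' iA] unfolding \<sigma>_def[symmetric] by blast
    have goal: "q (add_to i \<sigma> B) = q (add_to i \<sigma> {})"
    proof (cases "B = {}")
      case True then show ?thesis by simp
    next
      case False
      then have Bs: "B \<in> \<sigma>" using B by auto
      have "B \<subseteq> N - {i}" using Bs \<sigma> unfolding pon_iff by auto
      then have "finite B" using fN finite_subset by blast
      then have cB: "card B > 0" using False card_gt_0_iff by blast
      have pe: "p N (add_to i \<sigma> B) = real (card B) * p N (add_to i \<sigma> {})"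
        by (rule crp[OF U ap(1,2,4,5) N i \<sigma> Bs])
      have fA: "finite (N - {i})" using fN by simp
      have pf1: "pf (add_to i \<sigma> B) = real (card B) * pf \<sigma>"
        using pf_add_to[OF \<sigma> fA iA B(1)] False by (simp add: wt_def)
      have pf0: "pf (add_to i \<sigma> {}) = pf \<sigma>"
        using pf_add_to[OF \<sigma> fA iA, of "{}"] by (simp add: wt_def)
      show ?thesis unfolding q_def pe pf1 pf0 using cB by simp
    qed
    have "q \<rho> = q (add_to i \<sigma> B)" using B(2) by simp
    then show ?thesis using goal unfolding \<sigma>_def by simp
  qed
  let ?s = "(\<lambda>x. {x}) ` N"
  have allq: "\<forall>\<rho>. partition_on N \<rho> \<longrightarrow> card {i\<in>N. {i} \<notin> \<rho>} = m \<longrightarrow> q \<rho> = q ?s" for m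
  proof (induction m rule: less_induct)
    case (less m)
    show ?case
    proof (intro allI impI)
      fix \<rho> assume \<rho>: "partition_on N \<rho>" and m: "card {i\<in>N. {i} \<notin> \<rho>} = m"
      show "q \<rho> = q ?s"
      proof (cases "{i\<in>N. {i} \<notin> \<rho>} = {}")
        case True
        then have "\<rho> = ?s" using singl_part[OF \<rho>] by auto
        then show ?thesis by simp
      next
        case False
        then obtain i where i: "i \<in> N" "{i} \<notin> \<rho>" by auto
        let ?\<rho> = "add_to i (rem i \<rho>) {}"
        have ins: "insert i (N - {i}) = N" using i by auto
        have \<rho>': "partition_on (insert i (N - {i})) \<rho>" using \<rho> ins by simp
        have iA: "i \<notin> N - {i}" by simp
        have \<sigma>: "partition_on (N - {i}) (rem i \<rho>)" by (rule rem_part[OF \<rho>' iA])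
        have p2: "partition_on N ?\<rho>" using add_to_part[OF \<sigma> iA, of "{}"] ins by simp
        have sub: "{j\<in>N. {j} \<notin> ?\<rho>} \<subseteq> {j\<in>N. {j} \<notin> \<rho>} - {i}"
        proof
          fix j assume j: "j \<in> {j\<in>N. {j} \<notin> ?\<rho>}"
          have "j \<noteq> i" using j unfolding add_to_def by auto
          moreover have "{j} \<notin> \<rho>"
          proof
            assume "{j} \<in> \<rho>"
            then have "{j} - {i} \<in> (\<lambda>X. X - {i}) ` \<rho>" by blast
            moreover have "{j} - {i} = {j}" using \<open>j \<noteq> i\<close> by auto
            ultimately have "{j} \<in> rem i \<rho>" unfolding rem_def by auto
            then show False using j unfolding add_to_def by auto
          qed
          ultimately show "j \<in> {j\<in>N. {j} \<notin> \<rho>} - {i}" using j by auto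
        qed
        have fin: "finite {j\<in>N. {j} \<notin> \<rho>}" using fN by simp
        have "card {j\<in>N. {j} \<notin> ?\<rho>} \<le> card ({j\<in>N. {j} \<notin> \<rho>} - {i})"
          using sub fin by (intro card_mono) auto
        also have "\<dots> < card {j\<in>N. {j} \<notin> \<rho>}" using i fin by (intro card_Diff1_less) auto
        finally have lt: "card {j\<in>N. {j} \<notin> ?\<rho>} < m" using m by simp
        have "q ?\<rho> = q ?s" using less.IH[OF lt] p2 by blast
        then show ?thesis using step[OF \<rho> i(1)] by simp
      qed
    qed
  qed
  have qs: "\<And>\<rho>. partition_on N \<rho> \<Longrightarrow> p N \<rho> = q ?s * pf \<rho>"
  proof -
    fix \<rho> assume \<rho>: "partition_on N \<rho>"
    have "q \<rho> = q ?s" using allq \<rho> by blast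
    moreover have "pf \<rho> > 0" using pf_pos finite_elements[OF fN \<rho>] by blast
    ultimately show "p N \<rho> = q ?s * pf \<rho>" unfolding q_def by (simp add: field_simps)
  qed
  have "1 = (\<Sum>\<rho>\<in>partitions N. p N \<rho>)" using RP N unfolding random_partition_def by auto
  also have "\<dots> = (\<Sum>\<rho>\<in>partitions N. q ?s * pf \<rho>)" using qs by (intro sum.cong) (auto simp: partitions_def)
  also have "\<dots> = q ?s * fact (card N)" using sum_pf[OF fN] by (simp add: sum_distrib_left[symmetric])
  finally have "q ?s = 1 / fact (card N)" by (simp add: field_simps)
  then show ?thesis using qs[OF \<pi>] unfolding ewens_pf by simp
qed

lemma rep_ew:
  assumes U: "finite U" and A: "admissible_restriction U ewens r"
    and N: "N \<subseteq> U" and w: "tux_game N w" and T: "T \<subseteq> N" "T \<noteq> {}"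
  shows "aux_game r N w T = (\<Sum>\<tau>\<in>partitions (N - T). ewens (N - T) \<tau> * w T \<tau>)"
proof -
  note ap = adm_parts[OF U A]
  have fN: "finite N" using N U finite_subset by blast
  let ?c = "fact (card T - 1) * fact (card N - card T) / fact (card N) :: real"
  have "?c * aux_game r N w T = (\<Sum>\<tau>\<in>partitions (N - T). ewens N (insert T \<tau>) * w T \<tau>)"
    by (rule rep[OF U ap(1,2,4) N w T])
  also have "\<dots> = (\<Sum>\<tau>\<in>partitions (N - T). ?c * (ewens (N - T) \<tau> * w T \<tau>))"
    using ewens_insert_block[OF fN T] by (intro sum.cong[OF refl]) (simp add: partitions_def)
  also have "\<dots> = ?c * (\<Sum>\<tau>\<in>partitions (N - T). ewens (N - T) \<tau> * w T \<tau>)" by (simp add: sum_distrib_left)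
  finally show ?thesis by simp
qed

lemma r_unique:
  assumes U: "finite U" and A: "admissible_restriction U ewens r"
    and N: "N \<subseteq> U" and w: "tux_game N w" and i: "i \<in> N" and e: "embedded (N - {i}) S \<pi>"
  shows "r N w i S \<pi> = r_star N w i S \<pi>"
proof -
  note ap = adm_parts[OF U A]
  have fN: "finite N" using N U finite_subset by blast
  have S: "S \<subseteq> N - {i}" and p: "partition_on (N - {i} - S) \<pi>" using e unfolding embedded_def by auto
  show ?thesis
  proof (cases "S = {}")
    case True
    have "tux_game (N - {i}) (r N w i)" by (rule ro_tux[OF ap(1) N w i])
    moreover have "tux_game (N - {i}) (r_star N w i)" by (rule ro_tux[OF ro_star N w i])
    ultimately show ?thesis using True p unfolding tux_game_def by simp
  next
    case False
    let ?A = "N - {i} - S"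
    define w' where "w' = (\<lambda>S' \<rho>. if S' = S \<and> rem i \<rho> = \<pi> then w S' \<rho> else 0)"
    have tw': "tux_game N w'" unfolding tux_game_def w'_def using False by simp
    have SN: "S \<subseteq> N" using S by auto
    have finA: "finite ?A" using fN by simp
    have iA: "i \<notin> ?A" by simp
    have "aux_game r N w' S = (\<Sum>\<rho>\<in>partitions (N - S). ewens (N - S) \<rho> * w' S \<rho>)"
      by (rule rep_ew[OF U A N tw' SN False])
    also have "\<dots> = (\<Sum>\<rho>\<in>partitions (N - S). if rem i \<rho> = \<pi> then ewens (N - S) \<rho> * w S \<rho> else 0)"
      unfolding w'_def by (intro sum.cong[OF refl]) simp
    also have "\<dots> = (\<Sum>\<rho>\<in>{\<rho>\<in>partitions (N - S). rem i \<rho> = \<pi>}. ewens (N - S) \<rho> * w S \<rho>)"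
      using fN by (intro sum.inter_filter[symmetric]) (simp add: finite_partitions)
    also have "\<dots> = ewens ?A \<pi> * r_star N w i S \<pi>"
      by (rule cond_star[OF fN i S p, symmetric])
    finally have l: "aux_game r N w' S = ewens ?A \<pi> * r_star N w i S \<pi>" .
    have Ni: "N - {i} \<subseteq> U" using N by auto
    have tr: "tux_game (N - {i}) (r N w' i)" by (rule ro_tux[OF ap(1) N tw' i])
    have z0: "tux_game N (\<lambda>S \<pi>. 0)" unfolding tux_game_def by simp
    have rv: "r N w' i S \<tau> = (if \<tau> = \<pi> then r N w i S \<pi> else 0)" if \<tau>: "partition_on ?A \<tau>" for \<tau>
    proof -
      have e\<tau>: "embedded (N - {i}) S \<tau>" unfolding embedded_def using S \<tau> by simp
      have ra: "\<And>B. B \<in> insert {} \<tau> \<Longrightarrow> rem i (add_to i \<tau> B) = \<tau>" by (rule rem_add_to[OF \<tau> iA])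
      show ?thesis
      proof (cases "\<tau> = \<pi>")
        case True
        have "\<forall>B\<in>insert {} \<tau>. w' S (add_to i \<tau> B) = w S (add_to i \<tau> B)" using ra True unfolding w'_def by simp
        then show ?thesis using ro_loc[OF ap(1) N tw' i w e\<tau>] True by simp
      next
        case False
        have "\<forall>B\<in>insert {} \<tau>. w' S (add_to i \<tau> B) = (\<lambda>S \<pi>. 0) S (add_to i \<tau> B)" using ra False unfolding w'_def by simp
        then have "r N w' i S \<tau> = r N (\<lambda>S \<pi>. 0) i S \<tau>" using ro_loc[OF ap(1) N tw' i z0 e\<tau>] by simp
        also have "\<dots> = 0" using ap(2) N i e\<tau> unfolding preserves_null_def by blast
        finally show ?thesis using False by simp
      qed
    qed
    have "aux_game r (N - {i}) (r N w' i) S = (\<Sum>\<tau>\<in>partitions (N - {i} - S). ewens (N - {i} - S) \<tau> * r N w' i S \<tau>)"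
      by (rule rep_ew[OF U A Ni tr S False])
    also have "\<dots> = (\<Sum>\<tau>\<in>partitions ?A. if \<tau> = \<pi> then ewens ?A \<pi> * r N w i S \<pi> else 0)"
      using rv by (intro sum.cong[OF refl]) (simp add: partitions_def)
    also have "\<dots> = ewens ?A \<pi> * r N w i S \<pi>"
    proof -
      have "\<pi> \<in> partitions ?A" using p by (simp add: partitions_def)
      then show ?thesis by (simp add: finite_partitions[OF finA])
    qed
    finally have r2: "aux_game r (N - {i}) (r N w' i) S = ewens ?A \<pi> * r N w i S \<pi>" .
    have "aux_game r (N - {i}) (r N w' i) S = aux_game r N w' S"
      by (rule aux_path[OF ap(1,3) fN N tw' i S])
    then have "ewens ?A \<pi> * r N w i S \<pi> = ewens ?A \<pi> * r_star N w i S \<pi>" using l r2 by simp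
    moreover have "ewens ?A \<pi> > 0" using ewens_pos[OF finA p] .
    ultimately show ?thesis by simp
  qed
qed

theorem theorem5:
  fixes U :: "'a set"
  assumes "finite U"
  shows "random_partition U ewens \<and> generates_potential U ewens \<and>
         (\<exists>r. admissible_restriction U ewens r) \<and>
         (\<forall>p. random_partition U p \<and> generates_potential U p \<and>
              (\<exists>r. admissible_restriction U p r) \<longrightarrow>
              (\<forall>N \<pi>. N \<subseteq> U \<longrightarrow> partition_on N \<pi> \<longrightarrow> p N \<pi> = ewens N \<pi>)) \<and>
         admissible_restriction U ewens r_star \<and>
         (\<forall>r. admissible_restriction U ewens r \<longrightarrow>
              (\<forall>N w i S \<pi>. N \<subseteq> U \<longrightarrow> tux_game N w \<longrightarrow> i \<in> N \<longrightarrow>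
                  embedded (N - {i}) S \<pi> \<longrightarrow> r N w i S \<pi> = r_star N w i S \<pi>)) \<and>
         (\<forall>N w i. N \<subseteq> U \<longrightarrow> tux_game N w \<longrightarrow> i \<in> N \<longrightarrow>
              shapley_r r_star N w i = mpw N w i)"
proof -
  have potc: "\<forall>N w. N \<subseteq> U \<longrightarrow> tux_game N w \<longrightarrow> pot_r r_star N w = expect ewens N w"
  proof (intro allI impI)
    fix N w assume "N \<subseteq> U" "tux_game N w"
    then have "finite N" using assms finite_subset by blast
    then show "pot_r r_star N w = expect ewens N w" by (rule pot_star)
  qed
  have adm: "admissible_restriction U ewens r_star"
    unfolding admissible_restriction_def
  proof (intro conjI)
    show "restriction_operator U r_star" by (rule ro_star)
    show "path_independent U r_star" by (rule pi_star[OF assms])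
    show "preserves_null U r_star" by (rule pn_star)
    show "\<forall>N w. N \<subseteq> U \<longrightarrow> tux_game N w \<longrightarrow> pot_r r_star N w = expect ewens N w" by (rule potc)
    show "null_player_property U (shapley_r r_star) \<or> monotonic U (shapley_r r_star)"
      using null_star[OF assms] by (rule disjI1)
  qed
  show ?thesis
  proof (intro conjI)
    show "random_partition U ewens" by (rule rp_ewens[OF assms])
    show "generates_potential U ewens" by (rule gen_pot_ewens[OF assms])
    show "\<exists>r. admissible_restriction U ewens r" using adm by blast
    show "\<forall>p. random_partition U p \<and> generates_potential U p \<and> (\<exists>r. admissible_restriction U p r) \<longrightarrow>
        (\<forall>N \<pi>. N \<subseteq> U \<longrightarrow> partition_on N \<pi> \<longrightarrow> p N \<pi> = ewens N \<pi>)"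
    proof (intro allI impI)
      fix p N \<pi> assume h: "random_partition U p \<and> generates_potential U p \<and> (\<exists>r. admissible_restriction U p r)"
        and N: "N \<subseteq> U" and \<pi>: "partition_on N \<pi>"
      from h obtain r where rp: "random_partition U p" and ar: "admissible_restriction U p r" by blast
      show "p N \<pi> = ewens N \<pi>" by (rule p_unique[OF assms rp ar N \<pi>])
    qed
    show "admissible_restriction U ewens r_star" by (rule adm)
    show "\<forall>r. admissible_restriction U ewens r \<longrightarrow>
        (\<forall>N w i S \<pi>. N \<subseteq> U \<longrightarrow> tux_game N w \<longrightarrow> i \<in> N \<longrightarrow>
            embedded (N - {i}) S \<pi> \<longrightarrow> r N w i S \<pi> = r_star N w i S \<pi>)"
    proof (intro allI impI)
      fix r N w i S \<pi> assume ar: "admissible_restriction U ewens r" and N: "N \<subseteq> U"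
        and w: "tux_game N w" and i: "i \<in> N" and e: "embedded (N - {i}) S \<pi>"
      show "r N w i S \<pi> = r_star N w i S \<pi>" by (rule r_unique[OF assms ar N w i e])
    qed
    show "\<forall>N w i. N \<subseteq> U \<longrightarrow> tux_game N w \<longrightarrow> i \<in> N \<longrightarrow> shapley_r r_star N w i = mpw N w i"
    proof (intro allI impI)
      fix N w i assume N: "N \<subseteq> U" and "tux_game N w" and i: "i \<in> N"
      have fN: "finite N" using N assms finite_subset by blast
      show "shapley_r r_star N w i = mpw N w i" by (rule mpw_star[OF fN i])
    qed
  qed
qed

end
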